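(* Let $g\in L^2(\mathbb R)$, $a,b>0$, and suppose $(g,a,b)$ is a preframe system with upper frame bound $B$. Then for a.e. $t\in\mathbb R$, $$\sum_{n\in\mathbb Z}\big|\langle g,T_{na}g\rangle_{1/b}(t)\big|^2\le b\,B\,\|g\|_{1/b}(t).$$
   Context: $T_{a}g(t)=g(t-a)$, $E_{b}g(t)=e^{2\pi i bt}g(t)$. $(g,a,b)$ is preframe (PF) with upper frame bound $B$ if $\sum_{m,n\in\mathbb Z}|\langle f,E_{mb}T_{na}g\rangle|^2\le B\|f\|^2$ for all $f\in L^2(\mathbb R)$. The $\frac1b$-inner product is $\langle f,h\rangle_{1/b}(t)=\sum_{k\in\mathbb Z}f(t-k/b)\overline{h(t-k/b)}$ and $\|f\|_{1/b}(t)=\sum_{k\in\mathbb Z}|f(t-k/b)|^2$. *)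

theory Defs
  imports "HOL-Analysis.Analysis"
begin

definition L2 :: "(real \<Rightarrow> complex) set" where
  "L2 = {f. f \<in> borel_measurable lebesgue \<and> integrable lebesgue (\<lambda>t. (cmod (f t))\<^sup>2)}"

definition L2_inner :: "(real \<Rightarrow> complex) \<Rightarrow> (real \<Rightarrow> complex) \<Rightarrow> complex" where
  "L2_inner f h = (LINT t|lebesgue. f t * cnj (h t))"

definition L2_norm_sq :: "(real \<Rightarrow> complex) \<Rightarrow> real" where
  "L2_norm_sq f = (LINT t|lebesgue. (cmod (f t))\<^sup>2)"

definition transl :: "real \<Rightarrow> (real \<Rightarrow> complex) \<Rightarrow> real \<Rightarrow> complex" where
  "transl a g = (\<lambda>t. g (t - a))"

definition modul :: "real \<Rightarrow> (real \<Rightarrow> complex) \<Rightarrow> real \<Rightarrow> complex" where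
  "modul b g = (\<lambda>t. cis (2 * pi * b * t) * g t)"

definition preframe :: "(real \<Rightarrow> complex) \<Rightarrow> real \<Rightarrow> real \<Rightarrow> real \<Rightarrow> bool" where
  "preframe g a b B \<longleftrightarrow>
     (\<forall>f\<in>L2.
        (\<lambda>(m::int, n::int). (cmod (L2_inner f (modul (of_int m * b) (transl (of_int n * a) g))))\<^sup>2)
          summable_on UNIV \<and>
        (\<Sum>\<^sub>\<infinity>(m::int, n::int). (cmod (L2_inner f (modul (of_int m * b) (transl (of_int n * a) g))))\<^sup>2)
          \<le> B * L2_norm_sq f)"

definition inner_b :: "real \<Rightarrow> (real \<Rightarrow> complex) \<Rightarrow> (real \<Rightarrow> complex) \<Rightarrow> real \<Rightarrow> complex" where
  "inner_b b f h t = (\<Sum>\<^sub>\<infinity>k::int. f (t - of_int k / b) * cnj (h (t - of_int k / b)))"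

text \<open>The 1/b-bracket norm, as an extended nonnegative real (may be infinite on a null set).\<close>
definition norm_b :: "real \<Rightarrow> (real \<Rightarrow> complex) \<Rightarrow> real \<Rightarrow> ennreal" where
  "norm_b b f t = (\<Sum>\<^sub>\<infinity>k::int. ennreal ((cmod (f (t - of_int k / b)))\<^sup>2))"

end

theory Submission
  imports Defs
begin

lemma cont_meas_leb: "continuous_on UNIV f \<Longrightarrow> (f::real \<Rightarrow> 'b::topological_space) \<in> borel_measurable lebesgue"
  using continuous_imp_measurable_on_sets_lebesgue[of UNIV f] by (simp add: lebesgue_on_UNIV_eq)

lemma id_meas_leb[measurable]: "(\<lambda>x::real. x) \<in> borel_measurable lebesgue"
  using id_borel_measurable_lebesgue by (simp add: id_def)

lemma measurable_cnj'[measurable]: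
  "f \<in> borel_measurable M \<Longrightarrow> (\<lambda>x. cnj (f x :: complex)) \<in> borel_measurable M"
  by (rule borel_measurable_continuous_on[of cnj]) (auto intro: continuous_intros)

lemma cis_meas_leb[measurable]: "(\<lambda>t::real. cis (c * t)) \<in> borel_measurable lebesgue"
  by (rule cont_meas_leb) (auto intro!: continuous_intros)

lemma lebesgue_measurable_shift: "(\<lambda>x::real. x + c) \<in> lebesgue \<rightarrow>\<^sub>M lebesgue"
proof -
  have "(\<lambda>x::real. c + (\<Sum>j\<in>Basis. ((\<lambda>_. 1::real) j * (x \<bullet> j)) *\<^sub>R j)) \<in> lebesgue \<rightarrow>\<^sub>M lebesgue"
    by (rule lebesgue_affine_measurable) auto
  then show ?thesis by (simp add: add.commute)
qed

lemma measurable_shift_plus: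
  fixes f :: "real \<Rightarrow> 'b::topological_space"
  assumes "f \<in> borel_measurable lebesgue"
  shows "(\<lambda>x. f (x + c)) \<in> borel_measurable lebesgue"
  using measurable_compose[OF lebesgue_measurable_shift assms] by (simp add: o_def)

lemma measurable_shift_minus:
  fixes f :: "real \<Rightarrow> 'b::topological_space"
  assumes "f \<in> borel_measurable lebesgue"
  shows "(\<lambda>x. f (x - c)) \<in> borel_measurable lebesgue"
  using measurable_shift_plus[OF assms, of "-c"] by simp

lemma finite_int_subset_interval:
  fixes F :: "int set" assumes "finite F"
  shows "\<exists>j::nat. F \<subseteq> {-int j..int j}"
proof -
  have "\<forall>k\<in>F. \<bar>k\<bar> \<le> (\<Sum>i\<in>F. \<bar>i\<bar>)"
    using assms by (intro ballI member_le_sum) auto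
  then have "F \<subseteq> {-int (nat (\<Sum>i\<in>F. \<bar>i\<bar>))..int (nat (\<Sum>i\<in>F. \<bar>i\<bar>))}"
    by (auto simp: abs_le_iff)
  then show ?thesis by blast
qed

lemma infsum_int_SUP:
  fixes f :: "int \<Rightarrow> ennreal"
  shows "infsum f UNIV = (SUP j::nat. \<Sum>k\<in>{-int j..int j}. f k)"
proof -
  have "infsum f UNIV = Sup (sum f ` {F. finite F \<and> F \<subseteq> UNIV})"
    by (rule nonneg_infsum_complete) auto
  also have "\<dots> = (SUP j::nat. \<Sum>k\<in>{-int j..int j}. f k)"
  proof (rule antisym)
    show "Sup (sum f ` {F. finite F \<and> F \<subseteq> UNIV}) \<le> (SUP j::nat. \<Sum>k\<in>{-int j..int j}. f k)"
    proof (rule Sup_least, clarsimp)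
      fix F :: "int set" assume F: "finite F"
      obtain j where j: "F \<subseteq> {-int j..int j}"
        using finite_int_subset_interval[OF F] by blast
      have "sum f F \<le> (\<Sum>k\<in>{-int j..int j}. f k)"
        by (rule sum_mono2) (use j in auto)
      also have "\<dots> \<le> (SUP j::nat. \<Sum>k\<in>{-int j..int j}. f k)"
        by (rule SUP_upper) auto
      finally show "sum f F \<le> (SUP j::nat. \<Sum>k\<in>{-int j..int j}. f k)" .
    qed
    show "(SUP j::nat. \<Sum>k\<in>{-int j..int j}. f k) \<le> Sup (sum f ` {F. finite F \<and> F \<subseteq> UNIV})"
      by (rule SUP_least, rule Sup_upper) auto
  qed
  finally show ?thesis .
qed

lemma incseq_int_sums:
  fixes f :: "int \<Rightarrow> ennreal"
  shows "incseq (\<lambda>j::nat. \<Sum>k\<in>{-int j..int j}. f k)"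
  by (intro monoI sum_mono2) auto

lemma borel_measurable_infsum_int[measurable]:
  fixes f :: "int \<Rightarrow> 'a \<Rightarrow> ennreal"
  assumes [measurable]: "\<And>k. f k \<in> borel_measurable M"
  shows "(\<lambda>x. \<Sum>\<^sub>\<infinity>k. f k x) \<in> borel_measurable M"
  unfolding infsum_int_SUP by measurable

lemma nn_integral_infsum_int:
  fixes f :: "int \<Rightarrow> 'a \<Rightarrow> ennreal"
  assumes [measurable]: "\<And>k. f k \<in> borel_measurable M"
  shows "(\<integral>\<^sup>+x. (\<Sum>\<^sub>\<infinity>k. f k x) \<partial>M) = (\<Sum>\<^sub>\<infinity>k. \<integral>\<^sup>+x. f k x \<partial>M)"
proof -
  have "(\<integral>\<^sup>+x. (\<Sum>\<^sub>\<infinity>k. f k x) \<partial>M) = (\<integral>\<^sup>+x. (SUP j::nat. \<Sum>k\<in>{-int j..int j}. f k x) \<partial>M)"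
    by (simp add: infsum_int_SUP)
  also have "\<dots> = (SUP j::nat. \<integral>\<^sup>+x. (\<Sum>k\<in>{-int j..int j}. f k x) \<partial>M)"
    by (rule nn_integral_monotone_convergence_SUP)
       (auto simp: incseq_def le_fun_def intro!: sum_mono2)
  also have "\<dots> = (SUP j::nat. \<Sum>k\<in>{-int j..int j}. \<integral>\<^sup>+x. f k x \<partial>M)"
    by (subst nn_integral_sum) auto
  also have "\<dots> = (\<Sum>\<^sub>\<infinity>k. \<integral>\<^sup>+x. f k x \<partial>M)"
    by (simp add: infsum_int_SUP)
  finally show ?thesis .
qed

lemma infsum_int_cmult:
  fixes f :: "int \<Rightarrow> ennreal"
  shows "c * (\<Sum>\<^sub>\<infinity>k. f k) = (\<Sum>\<^sub>\<infinity>k. c * f k)"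
  by (simp add: infsum_int_SUP SUP_mult_left_ennreal sum_distrib_left)

lemma infsum_int_single:
  fixes f :: "int \<Rightarrow> 'a::{comm_monoid_add,t2_space}"
  assumes "\<And>k. k \<noteq> k0 \<Longrightarrow> f k = 0"
  shows "(\<Sum>\<^sub>\<infinity>k. f k) = f k0"
proof -
  have "(\<Sum>\<^sub>\<infinity>k. f k) = (\<Sum>\<^sub>\<infinity>k\<in>{k0}. f k)"
    by (rule infsum_cong_neutral) (use assms in auto)
  then show ?thesis by simp
qed

lemma periodize:
  fixes f :: "real \<Rightarrow> ennreal"
  assumes f[measurable]: "f \<in> borel_measurable lebesgue" and b: "b > 0"
  shows "(\<integral>\<^sup>+x. f x \<partial>lebesgue) =
         (\<integral>\<^sup>+t. indicator {s..<s+1/b} t * (\<Sum>\<^sub>\<infinity>k::int. f (t - of_int k / b)) \<partial>lebesgue)"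
proof -
  have ind[measurable]: "(indicator {s..<s+1/b} :: real \<Rightarrow> ennreal) \<in> borel_measurable lebesgue"
    by (rule borel_measurable_indicator) simp
  have m1: "(\<lambda>t. indicator {s..<s+1/b} t * f (t - of_int k / b)) \<in> borel_measurable lebesgue" for k
    using measurable_shift_minus[OF f, of "of_int k / b"] ind by (intro borel_measurable_times_ennreal) auto
  have m2: "(\<lambda>x. indicator {s..<s+1/b} (x + of_int k / b) * f x) \<in> borel_measurable lebesgue" for k
    using measurable_shift_plus[OF ind, of "of_int k / b"] f by (intro borel_measurable_times_ennreal) auto
  have "(\<integral>\<^sup>+t. indicator {s..<s+1/b} t * (\<Sum>\<^sub>\<infinity>k::int. f (t - of_int k / b)) \<partial>lebesgue)
      = (\<integral>\<^sup>+t. (\<Sum>\<^sub>\<infinity>k::int. indicator {s..<s+1/b} t * f (t - of_int k / b)) \<partial>lebesgue)"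
    by (simp add: infsum_int_cmult)
  also have "\<dots> = (\<Sum>\<^sub>\<infinity>k::int. \<integral>\<^sup>+t. indicator {s..<s+1/b} t * f (t - of_int k / b) \<partial>lebesgue)"
    by (rule nn_integral_infsum_int[OF m1])
  also have "\<dots> = (\<Sum>\<^sub>\<infinity>k::int. \<integral>\<^sup>+x. indicator {s..<s+1/b} (x + of_int k / b) * f x \<partial>lebesgue)"
  proof (rule infsum_cong)
    fix k :: int
    have "(\<integral>\<^sup>+t. indicator {s..<s+1/b} t * f (t - of_int k / b) \<partial>lebesgue)
        = ennreal \<bar>1\<bar> * (\<integral>\<^sup>+x. indicator {s..<s+1/b} (of_int k / b + 1 * x) * f ((of_int k / b + 1 * x) - of_int k / b) \<partial>lebesgue)"
      by (rule nn_integral_real_affine_lebesgue[OF m1]) simp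
    then show "(\<integral>\<^sup>+t. indicator {s..<s+1/b} t * f (t - of_int k / b) \<partial>lebesgue)
        = (\<integral>\<^sup>+x. indicator {s..<s+1/b} (x + of_int k / b) * f x \<partial>lebesgue)"
      by (simp add: add.commute)
  qed
  also have "\<dots> = (\<integral>\<^sup>+x. (\<Sum>\<^sub>\<infinity>k::int. indicator {s..<s+1/b} (x + of_int k / b) * f x) \<partial>lebesgue)"
    by (rule nn_integral_infsum_int[OF m2, symmetric])
  also have "\<dots> = (\<integral>\<^sup>+x. f x \<partial>lebesgue)"
  proof (rule nn_integral_cong)
    fix x :: real
    define k0 where "k0 = \<lceil>(s - x) * b\<rceil>"
    have ind: "indicator {s..<s+1/b} (x + of_int k / b) = (if k = k0 then 1 else (0::ennreal))" for k
    proof -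
      have e1: "s \<le> x + of_int k / b \<longleftrightarrow> (s - x) * b \<le> of_int k"
        using b by (simp add: field_simps)
      have e2: "x + of_int k / b < s + 1/b \<longleftrightarrow> of_int k < (s - x) * b + 1"
      proof -
        have "x + of_int k / b < s + 1/b \<longleftrightarrow> (x + of_int k / b) * b < (s + 1/b) * b"
          using b by simp
        also have "\<dots> \<longleftrightarrow> x * b + of_int k < s * b + 1"
          using b by (simp add: algebra_simps)
        finally show ?thesis by (simp add: algebra_simps)
      qed
      have "(x + of_int k / b \<in> {s..<s+1/b}) \<longleftrightarrow> ((s - x) * b \<le> of_int k \<and> of_int k < (s - x) * b + 1)"
        using e1 e2 by auto
      also have "\<dots> \<longleftrightarrow> k = k0"
        unfolding k0_def using ceiling_eq_iff[of "(s - x) * b" k] by auto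
      finally show ?thesis by (auto simp: indicator_def)
    qed
    show "(\<Sum>\<^sub>\<infinity>k::int. indicator {s..<s+1/b} (x + of_int k / b) * f x) = f x"
      by (subst infsum_int_single[of k0]) (auto simp: ind)
  qed
  finally show ?thesis by simp
qed

lemma add_sq_bound: "(cmod (x + y))\<^sup>2 \<le> 2 * (cmod x)\<^sup>2 + 2 * (cmod (y::complex))\<^sup>2"
proof -
  have "cmod (x + y) \<le> cmod x + cmod y" by (rule norm_triangle_ineq)
  then have "(cmod (x + y))\<^sup>2 \<le> (cmod x + cmod y)\<^sup>2"
    by (simp add: power_mono)
  also have "\<dots> \<le> 2 * (cmod x)\<^sup>2 + 2 * (cmod y)\<^sup>2"
    using sum_squares_ge_zero[of "cmod x - cmod y" 0] by (simp add: power2_eq_square algebra_simps)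
  finally show ?thesis .
qed

lemma prod_sq_bound: "cmod x * cmod (y::complex) \<le> (cmod x)\<^sup>2 + (cmod y)\<^sup>2"
proof -
  have h1: "2 * (cmod x * cmod y) \<le> (cmod x)\<^sup>2 + (cmod y)\<^sup>2"
    using sum_squares_ge_zero[of "cmod x - cmod y" 0] by (simp add: power2_eq_square algebra_simps)
  have h2: "0 \<le> cmod x * cmod y" by simp
  from h1 h2 show ?thesis by linarith
qed

lemma L2_D: "f \<in> L2 \<Longrightarrow> f \<in> borel_measurable lebesgue \<and> integrable lebesgue (\<lambda>t. (cmod (f t))\<^sup>2)"
  by (simp add: L2_def)

lemma L2_I: "f \<in> borel_measurable lebesgue \<Longrightarrow> integrable lebesgue (\<lambda>t. (cmod (f t))\<^sup>2) \<Longrightarrow> f \<in> L2"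
  by (simp add: L2_def)

lemma L2_transl: assumes "f \<in> L2" shows "transl c f \<in> L2"
proof (rule L2_I)
  show "transl c f \<in> borel_measurable lebesgue"
    unfolding transl_def using measurable_shift_minus L2_D[OF assms] by blast
  have "integrable lebesgue (\<lambda>x. (\<lambda>t. (cmod (f t))\<^sup>2) (- c + 1 * x))"
    by (rule lebesgue_integrable_real_affine) (use L2_D[OF assms] in auto)
  then show "integrable lebesgue (\<lambda>t. (cmod (transl c f t))\<^sup>2)"
    by (simp add: transl_def)
qed

lemma L2_modul: assumes "f \<in> L2" shows "modul c f \<in> L2"
proof (rule L2_I)
  have [measurable]: "f \<in> borel_measurable lebesgue" using L2_D[OF assms] by simp
  have "(\<lambda>t. cis (2 * pi * c * t)) \<in> borel_measurable lebesgue"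
    using cis_meas_leb[of "2 * pi * c"] by (simp add: mult.assoc)
  then show "modul c f \<in> borel_measurable lebesgue"
    unfolding modul_def by measurable
  show "integrable lebesgue (\<lambda>t. (cmod (modul c f t))\<^sup>2)"
    using L2_D[OF assms] by (simp add: modul_def norm_mult)
qed

lemma L2_zero: "(\<lambda>_. 0) \<in> L2"
  by (rule L2_I) auto

lemma L2_add: assumes "f \<in> L2" "h \<in> L2" shows "(\<lambda>t. f t + h t) \<in> L2"
proof (rule L2_I)
  have [measurable]: "f \<in> borel_measurable lebesgue" "h \<in> borel_measurable lebesgue"
    using L2_D[OF assms(1)] L2_D[OF assms(2)] by auto
  show m: "(\<lambda>t. f t + h t) \<in> borel_measurable lebesgue"
    by measurable
  have i: "integrable lebesgue (\<lambda>t. 2 * (cmod (f t))\<^sup>2 + 2 * (cmod (h t))\<^sup>2)"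
    using L2_D[OF assms(1)] L2_D[OF assms(2)] by auto
  show "integrable lebesgue (\<lambda>t. (cmod (f t + h t))\<^sup>2)"
  proof (rule Bochner_Integration.integrable_bound[OF i])
    show "(\<lambda>t. (cmod (f t + h t))\<^sup>2) \<in> borel_measurable lebesgue" using m by measurable
    show "AE x in lebesgue. norm ((cmod (f x + h x))\<^sup>2) \<le> norm (2 * (cmod (f x))\<^sup>2 + 2 * (cmod (h x))\<^sup>2)"
    proof (rule AE_I2)
      fix x
      have "(cmod (f x + h x))\<^sup>2 \<le> 2 * (cmod (f x))\<^sup>2 + 2 * (cmod (h x))\<^sup>2"
        by (rule add_sq_bound)
      then show "norm ((cmod (f x + h x))\<^sup>2) \<le> norm (2 * (cmod (f x))\<^sup>2 + 2 * (cmod (h x))\<^sup>2)"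
        by simp
    qed
  qed
qed

lemma L2_cmult: assumes "f \<in> L2" shows "(\<lambda>t. c * f t) \<in> L2"
proof (rule L2_I)
  have [measurable]: "f \<in> borel_measurable lebesgue"
    using L2_D[OF assms] by auto
  show "(\<lambda>t. c * f t) \<in> borel_measurable lebesgue"
    by measurable
  show "integrable lebesgue (\<lambda>t. (cmod (c * f t))\<^sup>2)"
    using L2_D[OF assms] by (simp add: norm_mult power_mult_distrib)
qed

lemma L2_sum: assumes "finite I" "\<And>i. i \<in> I \<Longrightarrow> f i \<in> L2" shows "(\<lambda>t. \<Sum>i\<in>I. f i t) \<in> L2"
  using assms
proof (induction I rule: finite_induct)
  case empty then show ?case using L2_zero by simp
next
  case (insert x F)
  then show ?case using L2_add[of "f x" "\<lambda>t. \<Sum>i\<in>F. f i t"] by simp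
qed

lemma L2_prod_integrable:
  assumes "f \<in> L2" "h \<in> L2"
  shows "integrable lebesgue (\<lambda>t. f t * cnj (h t))"
proof -
  have i: "integrable lebesgue (\<lambda>t. (cmod (f t))\<^sup>2 + (cmod (h t))\<^sup>2)"
    using L2_D[OF assms(1)] L2_D[OF assms(2)] by auto
  show ?thesis
  proof (rule Bochner_Integration.integrable_bound[OF i])
    have [measurable]: "f \<in> borel_measurable lebesgue" "h \<in> borel_measurable lebesgue"
      using L2_D[OF assms(1)] L2_D[OF assms(2)] by auto
    show "(\<lambda>t. f t * cnj (h t)) \<in> borel_measurable lebesgue"
      by measurable
    show "AE x in lebesgue. norm (f x * cnj (h x)) \<le> norm ((cmod (f x))\<^sup>2 + (cmod (h x))\<^sup>2)"
    proof (rule AE_I2)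
      fix x
      have "cmod (f x) * cmod (h x) \<le> (cmod (f x))\<^sup>2 + (cmod (h x))\<^sup>2"
        by (rule prod_sq_bound)
      then show "norm (f x * cnj (h x)) \<le> norm ((cmod (f x))\<^sup>2 + (cmod (h x))\<^sup>2)"
        by (simp add: norm_mult)
    qed
  qed
qed

lemma L2_inner_self:
  assumes "f \<in> L2" shows "L2_inner f f = complex_of_real (L2_norm_sq f)"
proof -
  have "L2_inner f f = (CLINT t|lebesgue. complex_of_real ((cmod (f t))\<^sup>2))"
    unfolding L2_inner_def by (intro Bochner_Integration.integral_cong refl complex_norm_square[symmetric])
  also have "\<dots> = complex_of_real (L2_norm_sq f)"
    unfolding L2_norm_sq_def by (rule integral_complex_of_real)
  finally show ?thesis .
qed

lemma L2_norm_sq_nonneg: "L2_norm_sq f \<ge> 0"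
  unfolding L2_norm_sq_def by simp

lemma L2_inner_sum_right:
  assumes "f \<in> L2" "finite W" "\<And>p. p \<in> W \<Longrightarrow> \<phi> p \<in> L2"
  shows "L2_inner f (\<lambda>t. \<Sum>p\<in>W. w p * \<phi> p t) = (\<Sum>p\<in>W. cnj (w p) * L2_inner f (\<phi> p))"
proof -
  have "L2_inner f (\<lambda>t. \<Sum>p\<in>W. w p * \<phi> p t) = (CLINT t|lebesgue. (\<Sum>p\<in>W. cnj (w p) * (f t * cnj (\<phi> p t))))"
    unfolding L2_inner_def by (simp add: sum_distrib_left mult_ac)
  also have "\<dots> = (\<Sum>p\<in>W. CLINT t|lebesgue. cnj (w p) * (f t * cnj (\<phi> p t)))"
    by (rule Bochner_Integration.integral_sum) (use L2_prod_integrable assms in auto)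
  also have "\<dots> = (\<Sum>p\<in>W. cnj (w p) * L2_inner f (\<phi> p))"
    unfolding L2_inner_def by simp
  finally show ?thesis .
qed

lemma synthesis:
  fixes w :: "int \<times> int \<Rightarrow> complex"
  assumes g: "g \<in> L2" and pf: "preframe g a b B" and W: "finite W"
  defines "F \<equiv> (\<lambda>t. \<Sum>p\<in>W. w p * modul (of_int (fst p) * b) (transl (of_int (snd p) * a) g) t)"
  shows "L2_norm_sq F \<le> max B 0 * (\<Sum>p\<in>W. (cmod (w p))\<^sup>2)"
proof -
  define \<phi> where "\<phi> p = modul (of_int (fst p) * b) (transl (of_int (snd p) * a) g)" for p :: "int \<times> int"
  have \<phi>L2: "\<phi> p \<in> L2" for p unfolding \<phi>_def by (intro L2_modul L2_transl g)
  have FL2: "F \<in> L2" unfolding F_def using L2_sum[OF W, of "\<lambda>p t. w p * \<phi> p t"] L2_cmult \<phi>L2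
    by (simp add: \<phi>_def)
  define X where "X = L2_norm_sq F"
  have X0: "X \<ge> 0" unfolding X_def by (rule L2_norm_sq_nonneg)
  define S where "S = (\<Sum>p\<in>W. (cmod (L2_inner F (\<phi> p)))\<^sup>2)"
  define Wn where "Wn = (\<Sum>p\<in>W. (cmod (w p))\<^sup>2)"
  have pfF: "(\<lambda>(m::int, n::int). (cmod (L2_inner F (modul (of_int m * b) (transl (of_int n * a) g))))\<^sup>2) summable_on UNIV"
       "(\<Sum>\<^sub>\<infinity>(m::int, n::int). (cmod (L2_inner F (modul (of_int m * b) (transl (of_int n * a) g))))\<^sup>2) \<le> B * L2_norm_sq F"
    using pf FL2 unfolding preframe_def by auto
  have "S = (\<Sum>p\<in>W. (\<lambda>(m::int, n::int). (cmod (L2_inner F (modul (of_int m * b) (transl (of_int n * a) g))))\<^sup>2) p)"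
    unfolding S_def \<phi>_def by (intro sum.cong) auto
  also have "\<dots> \<le> (\<Sum>\<^sub>\<infinity>(m::int, n::int). (cmod (L2_inner F (modul (of_int m * b) (transl (of_int n * a) g))))\<^sup>2)"
    by (rule finite_sum_le_infsum[OF pfF(1) W]) auto
  finally have SB: "S \<le> B * X" using pfF(2) unfolding X_def by simp
  have "complex_of_real X = L2_inner F F" unfolding X_def by (rule L2_inner_self[OF FL2, symmetric])
  also have "\<dots> = (\<Sum>p\<in>W. cnj (w p) * L2_inner F (\<phi> p))"
    unfolding F_def \<phi>_def[symmetric] by (rule L2_inner_sum_right[OF _ W \<phi>L2]) (use FL2 F_def \<phi>_def in auto)
  finally have Xeq: "complex_of_real X = (\<Sum>p\<in>W. cnj (w p) * L2_inner F (\<phi> p))" .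
  have "X = cmod (complex_of_real X)" using X0 by simp
  also have "\<dots> \<le> (\<Sum>p\<in>W. cmod (w p) * cmod (L2_inner F (\<phi> p)))"
    unfolding Xeq by (rule order_trans[OF norm_sum]) (simp add: norm_mult)
  finally have X1: "X \<le> (\<Sum>p\<in>W. cmod (w p) * cmod (L2_inner F (\<phi> p)))" .
  have "X\<^sup>2 \<le> (\<Sum>p\<in>W. cmod (w p) * cmod (L2_inner F (\<phi> p)))\<^sup>2"
    using X1 X0 by (simp add: power_mono)
  also have "\<dots> \<le> Wn * S"
    unfolding Wn_def S_def by (rule Cauchy_Schwarz_ineq_sum)
  also have "\<dots> \<le> Wn * (B * X)"
    using SB by (intro mult_left_mono) (auto simp: Wn_def intro: sum_nonneg)
  finally have X2: "X * X \<le> (Wn * B) * X" by (simp add: power2_eq_square mult_ac)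
  have Wn0: "Wn \<ge> 0" unfolding Wn_def by (auto intro: sum_nonneg)
  show ?thesis
  proof (cases "X = 0")
    case True then show ?thesis using Wn0 by (simp add: X_def Wn_def[symmetric])
  next
    case False
    then have "X > 0" using X0 by simp
    then have "X \<le> Wn * B" using X2 by simp
    also have "\<dots> \<le> max B 0 * Wn" using Wn0 by (metis max.cobounded1 mult_left_mono mult.commute)
    finally show ?thesis by (simp add: X_def Wn_def)
  qed
qed

definition trig :: "real \<Rightarrow> (int \<Rightarrow> complex) \<Rightarrow> int set \<Rightarrow> real \<Rightarrow> complex" where
  "trig b q M t = (\<Sum>m\<in>M. q m * cis (2 * pi * (of_int m * b) * t))"

lemma cis_int_period: "cis (2 * pi * (of_int m * b) * (t - of_int k / b)) = cis (2 * pi * (of_int m * b) * t)"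
  if "b \<noteq> 0" for b :: real
proof -
  have eq: "2 * pi * (of_int m * b) * (t - of_int k / b) = 2 * pi * (of_int m * b) * t + 2 * pi * of_int (- m * k)"
    using that by (simp add: field_simps)
  have one: "cis (2 * pi * of_int (- m * k)) = 1" by (rule cis_multiple_2pi) simp
  show ?thesis
    by (simp only: eq cis_mult[symmetric] one mult_1_right)
qed

lemma trig_periodic: "b \<noteq> 0 \<Longrightarrow> trig b q M (t - of_int k / b) = trig b q M t"
  unfolding trig_def by (simp add: cis_int_period)

lemma cis_has_vector_derivative:
  fixes c :: real assumes "c \<noteq> 0"
  shows "((\<lambda>t. cis (c * t) / (\<i> * c)) has_vector_derivative cis (c * t)) (at t within S)"
proof -
  have d: "((\<lambda>z. exp (\<i> * complex_of_real c * z) / (\<i> * complex_of_real c)) has_field_derivative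
          exp (\<i> * complex_of_real c * complex_of_real t)) (at (complex_of_real t))"
    using assms by (auto intro!: derivative_eq_intros simp: field_simps)
  have "((\<lambda>x. exp (\<i> * complex_of_real c * complex_of_real x) / (\<i> * complex_of_real c)) has_vector_derivative
          exp (\<i> * complex_of_real c * complex_of_real t)) (at t within S)"
    by (rule has_vector_derivative_real_field[OF d])
  then show ?thesis by (simp add: cis_conv_exp mult_ac)
qed

lemma cis_integral:
  fixes b :: real assumes b: "b > 0"
  shows "set_lebesgue_integral lebesgue {s..s+1/b} (\<lambda>t. cis (2 * pi * (of_int k * b) * t))
          = (if k = 0 then complex_of_real (1/b) else 0)"
proof -
  define c where "c = 2 * pi * (of_int k * b)"
  have cont: "continuous_on {s..s+1/b} (\<lambda>t. cis (c * t))"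
    by (auto intro!: continuous_intros)
  have ai: "(\<lambda>t. cis (c * t)) absolutely_integrable_on {s..s+1/b}"
    by (rule absolutely_integrable_continuous_real[OF cont])
  have eq: "set_lebesgue_integral lebesgue {s..s+1/b} (\<lambda>t. cis (c * t)) = integral {s..s+1/b} (\<lambda>t. cis (c * t))"
    by (rule set_lebesgue_integral_eq_integral(2)[OF ai])
  show ?thesis
  proof (cases "k = 0")
    case True
    then show ?thesis using b unfolding c_def[symmetric] eq by (simp add: c_def scaleR_conv_of_real of_real_divide)
  next
    case False
    then have c0: "c \<noteq> 0" using b by (simp add: c_def)
    have "((\<lambda>t. cis (c * t)) has_integral (cis (c * (s + 1/b)) / (\<i> * c) - cis (c * s) / (\<i> * c))) {s..s+1/b}"
      by (rule fundamental_theorem_of_calculus[where f="\<lambda>t. cis (c * t) / (\<i> * c)"])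
         (use b cis_has_vector_derivative[OF c0] in auto)
    moreover have "cis (c * (s + 1/b)) = cis (c * s)"
    proof -
      have "c * (s + 1/b) = c * s + 2 * pi * of_int k" using b by (simp add: c_def field_simps)
      then show ?thesis by (simp add: cis_mult[symmetric] cis_multiple_2pi)
    qed
    ultimately have "integral {s..s+1/b} (\<lambda>t. cis (c * t)) = 0"
      by (simp add: integral_unique)
    then show ?thesis using False unfolding c_def[symmetric] eq by simp
  qed
qed

lemma trig_integrable:
  "set_integrable lebesgue {s..e} (\<lambda>t. f (trig b q M t))" if "continuous_on UNIV f" for f :: "complex \<Rightarrow> 'a::euclidean_space"
proof -
  have "continuous_on {s..e} (\<lambda>t. f (trig b q M t))"
    unfolding trig_def by (intro continuous_on_compose2[OF that] continuous_intros) auto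
  then show ?thesis by (rule absolutely_integrable_continuous_real)
qed

lemma trig_norm_integral:
  fixes b :: real assumes b: "b > 0" and M: "finite M"
  shows "set_lebesgue_integral lebesgue {s..s+1/b} (\<lambda>t. (cmod (trig b q M t))\<^sup>2) = (1/b) * (\<Sum>m\<in>M. (cmod (q m))\<^sup>2)"
proof -
  define e where "e m t = cis (2 * pi * (of_int m * b) * t)" for m :: int and t :: real
  have ecnj: "cnj (e m t) = e (-m) t" for m t unfolding e_def by (simp add: cis_cnj)
  have emul: "e m t * e m' t = e (m + m') t" for m m' t unfolding e_def by (simp add: cis_mult algebra_simps)
  have eterm: "(q1 * e m t) * cnj (q2 * e m' t) = (q1 * cnj q2) * e (m - m') t" for q1 q2 m m' t
  proof -
    have "(q1 * e m t) * cnj (q2 * e m' t) = (q1 * cnj q2) * (e m t * e (-m') t)"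
      by (simp add: ecnj mult_ac)
    also have "e m t * e (-m') t = e (m - m') t" by (simp add: emul)
    finally show ?thesis .
  qed
  have eI: "set_lebesgue_integral lebesgue {s..s+1/b} (e k) = (if k = 0 then complex_of_real (1/b) else 0)" for k
    using cis_integral[OF b, of s k] by (simp add: e_def[abs_def])
  have eint: "set_integrable lebesgue {s..s+1/b} (e m)" for m
    unfolding e_def by (rule absolutely_integrable_continuous_real) (auto intro!: continuous_intros)
  have pt: "complex_of_real ((cmod (trig b q M t))\<^sup>2) = (\<Sum>m\<in>M. \<Sum>m'\<in>M. (q m * cnj (q m')) * e (m - m') t)" for t
  proof -
    have "complex_of_real ((cmod (trig b q M t))\<^sup>2) = trig b q M t * cnj (trig b q M t)"
      by (rule complex_norm_square)
    also have "\<dots> = (\<Sum>m\<in>M. \<Sum>m'\<in>M. (q m * cnj (q m')) * e (m - m') t)"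
      unfolding trig_def e_def[symmetric] cnj_sum sum_product
      by (intro sum.cong refl) (rule eterm)
    finally show ?thesis .
  qed
  have "complex_of_real (set_lebesgue_integral lebesgue {s..s+1/b} (\<lambda>t. (cmod (trig b q M t))\<^sup>2))
      = set_lebesgue_integral lebesgue {s..s+1/b} (\<lambda>t. complex_of_real ((cmod (trig b q M t))\<^sup>2))"
    by (rule set_integral_complex_of_real[symmetric])
  also have "\<dots> = set_lebesgue_integral lebesgue {s..s+1/b}
                     (\<lambda>t. \<Sum>m\<in>M. \<Sum>m'\<in>M. (q m * cnj (q m')) * e (m - m') t)"
    using pt by (intro set_lebesgue_integral_cong) auto
  also have "\<dots> = (\<Sum>m\<in>M. \<Sum>m'\<in>M. (q m * cnj (q m')) * set_lebesgue_integral lebesgue {s..s+1/b} (e (m - m')))"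
  proof -
    define W where "W = {s..s+1/b}"
    have ei: "integrable lebesgue (\<lambda>x. indicat_real W x *\<^sub>R e k x)" for k
      using eint[of k] unfolding set_integrable_def W_def .
    have "set_lebesgue_integral lebesgue W (\<lambda>t. \<Sum>m\<in>M. \<Sum>m'\<in>M. (q m * cnj (q m')) * e (m - m') t)
        = (CLINT x|lebesgue. \<Sum>m\<in>M. \<Sum>m'\<in>M. (q m * cnj (q m')) * (indicat_real W x *\<^sub>R e (m - m') x))"
      unfolding set_lebesgue_integral_def
      by (intro Bochner_Integration.integral_cong refl) (simp add: scaleR_sum_right)
    also have "\<dots> = (\<Sum>m\<in>M. CLINT x|lebesgue. \<Sum>m'\<in>M. (q m * cnj (q m')) * (indicat_real W x *\<^sub>R e (m - m') x))"
      by (intro Bochner_Integration.integral_sum Bochner_Integration.integrable_sum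
            Bochner_Integration.integrable_mult_right ei)
    also have "\<dots> = (\<Sum>m\<in>M. \<Sum>m'\<in>M. CLINT x|lebesgue. (q m * cnj (q m')) * (indicat_real W x *\<^sub>R e (m - m') x))"
      by (intro sum.cong refl Bochner_Integration.integral_sum Bochner_Integration.integrable_mult_right ei)
    also have "\<dots> = (\<Sum>m\<in>M. \<Sum>m'\<in>M. (q m * cnj (q m')) * set_lebesgue_integral lebesgue W (e (m - m')))"
      unfolding set_lebesgue_integral_def by (intro sum.cong refl) (rule Bochner_Integration.integral_mult_right_zero)
    finally show ?thesis unfolding W_def .
  qed
  also have "\<dots> = (\<Sum>m\<in>M. (q m * cnj (q m)) * complex_of_real (1/b))"
  proof (rule sum.cong[OF refl])
    fix m assume m: "m \<in> M"
    have "(\<Sum>m'\<in>M. (q m * cnj (q m')) * set_lebesgue_integral lebesgue {s..s+1/b} (e (m - m')))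
        = (\<Sum>m'\<in>M. if m' = m then (q m * cnj (q m)) * complex_of_real (1/b) else 0)"
      by (intro sum.cong refl) (auto simp: eI)
    also have "\<dots> = (q m * cnj (q m)) * complex_of_real (1/b)"
      using m M by simp
    finally show "(\<Sum>m'\<in>M. (q m * cnj (q m')) * set_lebesgue_integral lebesgue {s..s+1/b} (e (m - m')))
        = (q m * cnj (q m)) * complex_of_real (1/b)" .
  qed
  also have "\<dots> = complex_of_real ((1/b) * (\<Sum>m\<in>M. (cmod (q m))\<^sup>2))"
    by (simp add: complex_norm_square[symmetric] sum_distrib_left mult_ac)
  finally show ?thesis by (simp only: of_real_eq_iff)
qed

lemma AE_leb_neq: "AE x in lebesgue. x \<noteq> (e::real)"
  by (rule AE_completion[OF AE_lborel_singleton])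

lemma window_closed:
  fixes f :: "real \<Rightarrow> ennreal"
  shows "(\<integral>\<^sup>+t. indicator {s..<e} t * f t \<partial>lebesgue) = (\<integral>\<^sup>+t. indicator {s..e} t * f t \<partial>lebesgue)"
proof (rule nn_integral_cong_AE)
  show "AE t in lebesgue. indicator {s..<e} t * f t = indicator {s..e} t * f t"
    using AE_leb_neq[of e] by eventually_elim (auto simp: indicator_def)
qed

definition uc :: "(real \<Rightarrow> complex) \<Rightarrow> real \<Rightarrow> int set \<Rightarrow> (int \<Rightarrow> complex) \<Rightarrow> real \<Rightarrow> complex" where
  "uc g a N c t = (\<Sum>n\<in>N. c n * g (t - of_int n * a))"

definition Vc :: "(real \<Rightarrow> complex) \<Rightarrow> real \<Rightarrow> real \<Rightarrow> int set \<Rightarrow> (int \<Rightarrow> complex) \<Rightarrow> real \<Rightarrow> ennreal" where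
  "Vc g a b N c t = (\<Sum>\<^sub>\<infinity>k::int. ennreal ((cmod (uc g a N c (t - of_int k / b)))\<^sup>2))"

lemma uc_L2: "g \<in> L2 \<Longrightarrow> finite N \<Longrightarrow> uc g a N c \<in> L2"
  unfolding uc_def[abs_def]
  by (rule L2_sum) (auto intro!: L2_cmult simp: L2_transl[unfolded transl_def])

lemma L2_nn_integral:
  assumes "f \<in> L2"
  shows "(\<integral>\<^sup>+t. ennreal ((cmod (f t))\<^sup>2) \<partial>lebesgue) = ennreal (L2_norm_sq f)"
  unfolding L2_norm_sq_def using L2_D[OF assms] by (intro nn_integral_eq_integral) auto

lemma L2_nn_integral_finite:
  assumes "f \<in> L2"
  shows "(\<integral>\<^sup>+t. ennreal ((cmod (f t))\<^sup>2) \<partial>lebesgue) < \<infinity>"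
  using L2_nn_integral[OF assms] by simp

lemma trig_nn_integral:
  assumes b: "b > 0" and M: "finite M"
  shows "(\<integral>\<^sup>+t. indicator {s..s+1/b} t * ennreal ((cmod (trig b q M t))\<^sup>2) \<partial>lebesgue)
         = ennreal ((1/b) * (\<Sum>m\<in>M. (cmod (q m))\<^sup>2))"
proof -
  have si: "set_integrable lebesgue {s..s+1/b} (\<lambda>t. (cmod (trig b q M t))\<^sup>2)"
    by (rule trig_integrable) (auto intro!: continuous_intros)
  have "(\<integral>\<^sup>+t. indicator {s..s+1/b} t * ennreal ((cmod (trig b q M t))\<^sup>2) \<partial>lebesgue)
      = (\<integral>\<^sup>+t. ennreal (indicator {s..s+1/b} t *\<^sub>R (cmod (trig b q M t))\<^sup>2) \<partial>lebesgue)"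
    by (intro nn_integral_cong) (simp add: indicator_mult_ennreal)
  also have "\<dots> = ennreal (set_lebesgue_integral lebesgue {s..s+1/b} (\<lambda>t. (cmod (trig b q M t))\<^sup>2))"
    unfolding set_lebesgue_integral_def
    by (rule nn_integral_eq_integral) (use si in \<open>auto simp: set_integrable_def\<close>)
  also have "\<dots> = ennreal ((1/b) * (\<Sum>m\<in>M. (cmod (q m))\<^sup>2))"
    by (simp add: trig_norm_integral[OF b M])
  finally show ?thesis .
qed

lemma main_ineq:
  assumes g: "g \<in> L2" and pf: "preframe g a b B" and b: "b > 0"
    and M: "finite M" and N: "finite N"
  shows "(\<integral>\<^sup>+t. indicator {s..s+1/b} t * (ennreal ((cmod (trig b q M t))\<^sup>2) * Vc g a b N c t) \<partial>lebesgue)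
         \<le> ennreal (b * max B 0 * (\<Sum>n\<in>N. (cmod (c n))\<^sup>2)) *
           (\<integral>\<^sup>+t. indicator {s..s+1/b} t * ennreal ((cmod (trig b q M t))\<^sup>2) \<partial>lebesgue)"
proof -
  define u where "u = uc g a N c"
  define F where "F t = trig b q M t * u t" for t
  define w where "w p = q (fst p) * c (snd p)" for p :: "int \<times> int"
  have uL2: "u \<in> L2" unfolding u_def by (rule uc_L2[OF g N])
  have Feq: "F = (\<lambda>t. \<Sum>p\<in>M \<times> N. w p * modul (of_int (fst p) * b) (transl (of_int (snd p) * a) g) t)"
  proof
    fix t
    have "F t = (\<Sum>m\<in>M. \<Sum>n\<in>N. (q m * cis (2 * pi * (of_int m * b) * t)) * (c n * g (t - of_int n * a)))"
      unfolding F_def trig_def u_def uc_def sum_product ..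
    also have "\<dots> = (\<Sum>p\<in>M \<times> N. w p * modul (of_int (fst p) * b) (transl (of_int (snd p) * a) g) t)"
      unfolding sum.cartesian_product
      by (intro sum.cong refl) (auto simp: w_def modul_def transl_def mult_ac)
    finally show "F t = (\<Sum>p\<in>M \<times> N. w p * modul (of_int (fst p) * b) (transl (of_int (snd p) * a) g) t)" .
  qed
  have syn: "L2_norm_sq F \<le> max B 0 * (\<Sum>p\<in>M \<times> N. (cmod (w p))\<^sup>2)"
    unfolding Feq by (rule synthesis[OF g pf]) (use M N in auto)
  have wsum: "(\<Sum>p\<in>M \<times> N. (cmod (w p))\<^sup>2) = (\<Sum>m\<in>M. (cmod (q m))\<^sup>2) * (\<Sum>n\<in>N. (cmod (c n))\<^sup>2)"
    unfolding sum_product sum.cartesian_product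
    by (intro sum.cong refl) (auto simp: w_def norm_mult power_mult_distrib)
  have FL2: "F \<in> L2" unfolding Feq
    by (rule L2_sum) (use M N g in \<open>auto intro!: L2_cmult L2_modul L2_transl\<close>)
  have Fm0[measurable]: "F \<in> borel_measurable lebesgue"
    using L2_D[OF FL2] by simp
  have Fm[measurable]: "(\<lambda>t. ennreal ((cmod (F t))\<^sup>2)) \<in> borel_measurable lebesgue"
    by measurable
  have "(\<integral>\<^sup>+t. indicator {s..s+1/b} t * (ennreal ((cmod (trig b q M t))\<^sup>2) * Vc g a b N c t) \<partial>lebesgue)
      = (\<integral>\<^sup>+t. indicator {s..<s+1/b} t * (ennreal ((cmod (trig b q M t))\<^sup>2) * Vc g a b N c t) \<partial>lebesgue)"
    by (rule window_closed[symmetric])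
  also have "\<dots> = (\<integral>\<^sup>+t. indicator {s..<s+1/b} t * (\<Sum>\<^sub>\<infinity>k::int. ennreal ((cmod (F (t - of_int k / b)))\<^sup>2)) \<partial>lebesgue)"
  proof (intro nn_integral_cong)
    fix t
    have "ennreal ((cmod (trig b q M t))\<^sup>2) * Vc g a b N c t
        = (\<Sum>\<^sub>\<infinity>k::int. ennreal ((cmod (trig b q M t))\<^sup>2) * ennreal ((cmod (u (t - of_int k / b)))\<^sup>2))"
      unfolding Vc_def u_def by (rule infsum_int_cmult)
    also have "\<dots> = (\<Sum>\<^sub>\<infinity>k::int. ennreal ((cmod (F (t - of_int k / b)))\<^sup>2))"
      using b by (intro infsum_cong) (simp add: F_def trig_periodic norm_mult power_mult_distrib ennreal_mult)
    finally show "indicator {s..<s+1/b} t * (ennreal ((cmod (trig b q M t))\<^sup>2) * Vc g a b N c t)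
        = indicator {s..<s+1/b} t * (\<Sum>\<^sub>\<infinity>k::int. ennreal ((cmod (F (t - of_int k / b)))\<^sup>2))" by simp
  qed
  also have "\<dots> = (\<integral>\<^sup>+t. ennreal ((cmod (F t))\<^sup>2) \<partial>lebesgue)"
    by (rule periodize[OF Fm b, symmetric])
  also have "\<dots> = ennreal (L2_norm_sq F)"
    by (rule L2_nn_integral[OF FL2])
  also have "\<dots> \<le> ennreal (max B 0 * ((\<Sum>m\<in>M. (cmod (q m))\<^sup>2) * (\<Sum>n\<in>N. (cmod (c n))\<^sup>2)))"
    using syn wsum by (intro ennreal_leI) simp
  also have "\<dots> = ennreal (b * max B 0 * (\<Sum>n\<in>N. (cmod (c n))\<^sup>2)) * ennreal ((1/b) * (\<Sum>m\<in>M. (cmod (q m))\<^sup>2))"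
    using b by (subst ennreal_mult[symmetric]) (auto intro!: sum_nonneg mult_nonneg_nonneg simp: field_simps)
  also have "\<dots> = ennreal (b * max B 0 * (\<Sum>n\<in>N. (cmod (c n))\<^sup>2)) *
           (\<integral>\<^sup>+t. indicator {s..s+1/b} t * ennreal ((cmod (trig b q M t))\<^sup>2) \<partial>lebesgue)"
    by (simp add: trig_nn_integral[OF b M])
  finally show ?thesis .
qed

lemma trig_group:
  assumes P: "finite P"
  shows "(\<Sum>p\<in>P. \<gamma> p * cis (2 * pi * (of_int (\<kappa> p) * b) * t))
         = trig b (\<lambda>m. \<Sum>p\<in>{p\<in>P. \<kappa> p = m}. \<gamma> p) (\<kappa> ` P) t"
proof -
  have "trig b (\<lambda>m. \<Sum>p\<in>{p\<in>P. \<kappa> p = m}. \<gamma> p) (\<kappa> ` P) t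
      = (\<Sum>m\<in>\<kappa> ` P. \<Sum>p\<in>{p\<in>P. \<kappa> p = m}. \<gamma> p * cis (2 * pi * (of_int (\<kappa> p) * b) * t))"
    unfolding trig_def sum_distrib_right by (intro sum.cong refl) auto
  also have "\<dots> = (\<Sum>p\<in>P. \<gamma> p * cis (2 * pi * (of_int (\<kappa> p) * b) * t))"
    by (rule sum.group) (use P in auto)
  finally show ?thesis by simp
qed

lemma cos_cis: "complex_of_real (cos x) = (cis x + cis (- x)) / 2"
  by (simp add: complex_eq_iff cis.sel)

lemma poly_cos_trig:
  fixes a :: "nat \<Rightarrow> real" and d :: nat and b tc :: real
  shows "\<exists>M q. finite M \<and> (\<forall>t. trig b q M t = complex_of_real (\<Sum>i\<le>d. a i * (cos (2 * pi * b * (t - tc))) ^ i))"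
proof -
  define P where "P = Sigma {..d} (\<lambda>i. {..i})"
  define \<kappa> where "\<kappa> p = 2 * int (snd p) - int (fst p)" for p :: "nat \<times> nat"
  define \<gamma> where "\<gamma> p = complex_of_real (a (fst p) / 2 ^ (fst p) * of_nat (fst p choose snd p))
                    * cis (- (2 * pi * (of_int (\<kappa> p) * b) * tc))" for p :: "nat \<times> nat"
  have P: "finite P" unfolding P_def by auto
  have key: "complex_of_real (\<Sum>i\<le>d. a i * (cos (2 * pi * b * (t - tc))) ^ i)
           = (\<Sum>p\<in>P. \<gamma> p * cis (2 * pi * (of_int (\<kappa> p) * b) * t))" for t
  proof -
    define \<theta> where "\<theta> = 2 * pi * b * (t - tc)"
    have pw: "complex_of_real ((cos \<theta>) ^ i) = (\<Sum>l\<le>i. complex_of_real (1 / 2 ^ i * of_nat (i choose l)) * cis (of_int (2 * int l - int i) * \<theta>))" for i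
    proof -
      have "complex_of_real ((cos \<theta>) ^ i) = ((cis \<theta> + cis (- \<theta>)) / 2) ^ i"
        by (simp add: cos_cis[symmetric])
      also have "\<dots> = (cis \<theta> + cis (- \<theta>)) ^ i / 2 ^ i"
        by (simp add: power_divide)
      also have "(cis \<theta> + cis (- \<theta>)) ^ i = (\<Sum>l\<le>i. of_nat (i choose l) * cis \<theta> ^ l * cis (- \<theta>) ^ (i - l))"
        by (rule binomial_ring)
      also have "\<dots> = (\<Sum>l\<le>i. of_nat (i choose l) * cis (of_int (2 * int l - int i) * \<theta>))"
      proof (intro sum.cong refl)
        fix l assume "l \<in> {..i}"
        then have li: "l \<le> i" by simp
        have "cis \<theta> ^ l * cis (- \<theta>) ^ (i - l) = cis (real l * \<theta> + real (i - l) * (- \<theta>))"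
          by (simp add: Complex.DeMoivre cis_mult)
        also have "real l * \<theta> + real (i - l) * (- \<theta>) = of_int (2 * int l - int i) * \<theta>"
          using li by (simp add: of_nat_diff algebra_simps)
        finally show "of_nat (i choose l) * cis \<theta> ^ l * cis (- \<theta>) ^ (i - l) = of_nat (i choose l) * cis (of_int (2 * int l - int i) * \<theta>)"
          by (simp add: mult.assoc)
      qed
      finally show ?thesis
        by (simp add: sum_divide_distrib)
    qed
    have cs: "cis (of_int k * \<theta>) = cis (- (2 * pi * (of_int k * b) * tc)) * cis (2 * pi * (of_int k * b) * t)" for k
      by (simp add: cis_mult \<theta>_def algebra_simps)
    have "complex_of_real (\<Sum>i\<le>d. a i * (cos \<theta>) ^ i) = (\<Sum>i\<le>d. complex_of_real (a i) * complex_of_real ((cos \<theta>) ^ i))"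
      by simp
    also have "\<dots> = (\<Sum>i\<le>d. \<Sum>l\<le>i. \<gamma> (i, l) * cis (2 * pi * (of_int (\<kappa> (i, l)) * b) * t))"
      unfolding pw cs
      by (intro sum.cong refl) (simp add: sum_distrib_left \<gamma>_def \<kappa>_def mult_ac)
    also have "\<dots> = (\<Sum>p\<in>P. \<gamma> p * cis (2 * pi * (of_int (\<kappa> p) * b) * t))"
    proof -
      have "(\<Sum>i\<le>d. \<Sum>l\<le>i. \<gamma> (i, l) * cis (2 * pi * (of_int (\<kappa> (i, l)) * b) * t))
          = (\<Sum>(i, l)\<in>Sigma {..d} (\<lambda>i. {..i}). \<gamma> (i, l) * cis (2 * pi * (of_int (\<kappa> (i, l)) * b) * t))"
        by (rule sum.Sigma) auto
      then show ?thesis unfolding P_def by (simp add: case_prod_eta)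
    qed
    finally show ?thesis unfolding \<theta>_def .
  qed
  show ?thesis
    by (rule exI[of _ "\<kappa> ` P"], rule exI[of _ "\<lambda>m. \<Sum>p\<in>{p\<in>P. \<kappa> p = m}. \<gamma> p"])
       (use P key trig_group[OF P] in auto)
qed

lemma weierstrass_poly:
  assumes "continuous_on {-1..1} f" "e > 0"
  shows "\<exists>a d. \<forall>x\<in>{-1..1}. \<bar>f x - (\<Sum>i\<le>d. a i * x ^ i)\<bar> < (e::real)"
proof -
  obtain p where p: "real_polynomial_function p" "\<And>x. x \<in> {-1..1::real} \<Longrightarrow> \<bar>f x - p x\<bar> < e"
    using Stone_Weierstrass_real_polynomial_function[of "{-1..1}" f e] assms by auto
  obtain a d where ad: "p = (\<lambda>x. \<Sum>i\<le>d. a i * x ^ i)"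
    using p(1) real_polynomial_function_iff_sum by blast
  show ?thesis using p(2) unfolding ad by (intro exI[of _ a] exI[of _ d]) auto
qed

lemma trig_approx:
  assumes "continuous_on {-1..1} f" "e > 0"
  shows "\<exists>M q P. finite M \<and> (\<forall>t. trig b q M t = complex_of_real (P t) \<and>
                  \<bar>f (cos (2 * pi * b * (t - tc))) - P t\<bar> < (e::real))"
proof -
  obtain a d where ad: "\<forall>x\<in>{-1..1}. \<bar>f x - (\<Sum>i\<le>d. a i * x ^ i)\<bar> < e"
    using weierstrass_poly[OF assms] by blast
  obtain M q where Mq: "finite M" "\<forall>t. trig b q M t = complex_of_real (\<Sum>i\<le>d. a i * (cos (2 * pi * b * (t - tc))) ^ i)"
    using poly_cos_trig[where a=a and d=d and b=b and tc=tc] by blast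
  show ?thesis
    by (rule exI[of _ M], rule exI[of _ q], rule exI[of _ "\<lambda>t. \<Sum>i\<le>d. a i * (cos (2 * pi * b * (t - tc))) ^ i"])
       (use Mq ad in auto)
qed

lemma uc_measurable[measurable]: "g \<in> L2 \<Longrightarrow> finite N \<Longrightarrow> uc g a N c \<in> borel_measurable lebesgue"
  using uc_L2 L2_D by blast

lemma Vc_measurable[measurable]:
  assumes "g \<in> L2" "finite N"
  shows "Vc g a b N c \<in> borel_measurable lebesgue"
proof -
  have [measurable]: "(\<lambda>t. uc g a N c (t - of_int k / b)) \<in> borel_measurable lebesgue" for k
    by (rule measurable_shift_minus) (rule uc_measurable[OF assms])
  show ?thesis unfolding Vc_def[abs_def] by measurable
qed

lemma cos_ge_lemma: "0 \<le> u \<Longrightarrow> u \<le> pi \<Longrightarrow> \<bar>\<theta>\<bar> \<le> u \<Longrightarrow> cos u \<le> cos \<theta>"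
  using cos_mono_le_eq[of u "\<bar>\<theta>\<bar>"] cos_abs_real[of \<theta>] by auto

lemma cos_le_lemma: "\<bar>\<theta>\<bar> \<le> pi \<Longrightarrow> 0 \<le> u \<Longrightarrow> u \<le> \<bar>\<theta>\<bar> \<Longrightarrow> cos \<theta> \<le> cos u"
  using cos_mono_le_eq[of "\<bar>\<theta>\<bar>" u] cos_abs_real[of \<theta>] by auto

lemma interval_step:
  assumes g: "g \<in> L2" and pf: "preframe g a b B" and b: "b > 0" and N: "finite N"
    and h: "0 < h" and e: "0 < \<epsilon>" "\<epsilon> < 1" and d: "0 < \<delta>" "h/2 + \<delta> < 1/(2*b)"
  shows "ennreal ((1-\<epsilon>)\<^sup>2) * (\<integral>\<^sup>+t. indicator {x..x+h} t * Vc g a b N c t \<partial>lebesgue)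
         \<le> ennreal (b * max B 0 * (\<Sum>n\<in>N. (cmod (c n))\<^sup>2)) * ennreal ((1+\<epsilon>)\<^sup>2 * (h + 2*\<delta>) + \<epsilon>\<^sup>2 / b)"
proof -
  define V where "V = Vc g a b N c"
  define lam where "lam = b * max B 0 * (\<Sum>n\<in>N. (cmod (c n))\<^sup>2)"
  define tc where "tc = x + h/2"
  define r where "r = h/2"
  define s where "s = tc - 1/(2*b)"
  define W where "W = {s..s+1/b}"
  define \<beta> where "\<beta> = 2 * pi * b"
  define c1 where "c1 = cos (\<beta> * r)"
  define c2 where "c2 = cos (\<beta> * (r + \<delta>))"
  have \<beta>0: "\<beta> > 0" using b by (simp add: \<beta>_def)
  have r0: "r > 0" using h by (simp add: r_def)
  have rdpi: "\<beta> * (r + \<delta>) < pi"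
  proof -
    have "r + \<delta> < 1/(2*b)" using d by (simp add: r_def)
    then have "\<beta> * (r + \<delta>) < \<beta> * (1/(2*b))" using \<beta>0 by (intro mult_strict_left_mono) auto
    also have "\<beta> * (1/(2*b)) = pi" using b by (simp add: \<beta>_def)
    finally show ?thesis .
  qed
  have bd: "\<beta> * \<delta> > 0" using \<beta>0 d by simp
  have br: "\<beta> * r > 0" using \<beta>0 r0 by simp
  have brpi: "\<beta> * r \<le> pi"
  proof -
    have "\<beta> * (r + \<delta>) = \<beta> * r + \<beta> * \<delta>" by (simp add: algebra_simps)
    then show ?thesis using rdpi bd by linarith
  qed
  have brd: "\<beta> * r < \<beta> * (r + \<delta>)" using \<beta>0 d by simp
  have c12: "c2 < c1"
    unfolding c1_def c2_def
    by (subst cos_mono_less_eq) (use br brpi brd rdpi in auto)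
  define f where "f y = max 0 (min 1 ((y - c2) / (c1 - c2)))" for y
  have fc: "continuous_on {-1..1} f" unfolding f_def by (intro continuous_intros) (use c12 in auto)
  obtain M q P where MqP: "finite M" "\<And>t. trig b q M t = complex_of_real (P t)"
      "\<And>t. \<bar>f (cos (2 * pi * b * (t - tc))) - P t\<bar> < \<epsilon>"
    using trig_approx[OF fc e(1), of b tc] by blast
  have cmodT: "(cmod (trig b q M t))\<^sup>2 = (P t)\<^sup>2" for t by (simp add: MqP(2))
  have f01: "0 \<le> f y" "f y \<le> 1" for y unfolding f_def by auto
  have Pbd: "(P t)\<^sup>2 \<le> (1 + \<epsilon>)\<^sup>2" for t
  proof -
    have "\<bar>P t\<bar> \<le> 1 + \<epsilon>" using MqP(3)[of t] f01[of "cos (2 * pi * b * (t - tc))"] by linarith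
    then show ?thesis using e by (metis abs_le_square_iff abs_of_pos add_pos_pos zero_less_one)
  qed
  have Pin: "(1 - \<epsilon>)\<^sup>2 \<le> (P t)\<^sup>2" if "t \<in> {x..x+h}" for t
  proof -
    have "\<bar>t - tc\<bar> \<le> r" using that unfolding tc_def r_def abs_le_iff by auto
    then have "\<bar>\<beta> * (t - tc)\<bar> \<le> \<beta> * r"
      using \<beta>0 by (simp add: abs_mult)
    then have "c1 \<le> cos (\<beta> * (t - tc))"
      unfolding c1_def by (rule cos_ge_lemma[rotated 2]) (use \<beta>0 r0 rdpi d in \<open>auto intro: less_imp_le mult_nonneg_nonneg
          order_trans[OF mult_left_mono[of r "r + \<delta>" \<beta>]]\<close>)
    then have "f (cos (\<beta> * (t - tc))) = 1" unfolding f_def using c12 by (auto simp: field_simps)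
    then have "P t > 1 - \<epsilon>" using MqP(3)[of t] by (auto simp: \<beta>_def mult.assoc)
    then show ?thesis using e by (intro power_mono) auto
  qed
  have Pout: "(P t)\<^sup>2 \<le> \<epsilon>\<^sup>2" if "t \<in> W" "\<not> t \<in> {tc - r - \<delta>..tc + r + \<delta>}" for t
  proof -
    have a1: "\<bar>t - tc\<bar> \<le> 1/(2*b)" using that(1) by (auto simp: W_def s_def abs_le_iff)
    have a2: "r + \<delta> \<le> \<bar>t - tc\<bar>" using that(2) by (auto simp: abs_le_iff not_le)
    have "\<bar>\<beta> * (t - tc)\<bar> \<le> pi"
    proof -
      have "\<bar>\<beta> * (t - tc)\<bar> = \<beta> * \<bar>t - tc\<bar>" using \<beta>0 by (simp add: abs_mult)
      also have "\<dots> \<le> \<beta> * (1/(2*b))" using a1 \<beta>0 by (intro mult_left_mono) auto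
      also have "\<dots> = pi" using b by (simp add: \<beta>_def)
      finally show ?thesis .
    qed
    moreover have "\<beta> * (r + \<delta>) \<le> \<bar>\<beta> * (t - tc)\<bar>"
      using a2 \<beta>0 by (simp add: abs_mult)
    ultimately have "cos (\<beta> * (t - tc)) \<le> c2"
      unfolding c2_def by (intro cos_le_lemma) (use \<beta>0 r0 d in auto)
    then have "f (cos (\<beta> * (t - tc))) = 0" unfolding f_def using c12 by (auto simp: field_simps)
    then have "\<bar>P t\<bar> < \<epsilon>" using MqP(3)[of t] by (auto simp: \<beta>_def mult.assoc)
    then show ?thesis by (metis abs_le_square_iff abs_of_pos e(1) less_imp_le)
  qed
  have h2: "h/2 < 1/(2*b)" using d by linarith
  have sub: "{x..x+h} \<subseteq> W"
  proof
    fix t assume t: "t \<in> {x..x+h}"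
    have "s \<le> x" using h2 by (simp add: s_def tc_def)
    moreover have "x + h \<le> s + 1/b" using h2 b by (simp add: s_def tc_def field_simps)
    ultimately show "t \<in> W" using t by (auto simp: W_def)
  qed
  have Vm[measurable]: "V \<in> borel_measurable lebesgue" unfolding V_def by (rule Vc_measurable[OF g N])
  have "(\<integral>\<^sup>+t. indicator W t * ennreal ((cmod (trig b q M t))\<^sup>2) \<partial>lebesgue)
      \<le> (\<integral>\<^sup>+t. ennreal ((1+\<epsilon>)\<^sup>2) * indicator {tc - r - \<delta>..tc + r + \<delta>} t + ennreal (\<epsilon>\<^sup>2) * indicator W t \<partial>lebesgue)"
  proof (intro nn_integral_mono)
    fix t
    show "indicator W t * ennreal ((cmod (trig b q M t))\<^sup>2)
          \<le> ennreal ((1+\<epsilon>)\<^sup>2) * indicator {tc - r - \<delta>..tc + r + \<delta>} t + ennreal (\<epsilon>\<^sup>2) * indicator W t"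
    proof (cases "t \<in> W")
      case True
      show ?thesis
      proof (cases "t \<in> {tc - r - \<delta>..tc + r + \<delta>}")
        case True2: True
        have "ennreal ((cmod (trig b q M t))\<^sup>2) \<le> ennreal ((1+\<epsilon>)\<^sup>2)"
          using Pbd[of t] by (simp add: cmodT)
        then show ?thesis using True True2 by (simp add: add_increasing2)
      next
        case False2: False
        have "ennreal ((cmod (trig b q M t))\<^sup>2) \<le> ennreal (\<epsilon>\<^sup>2)"
          using Pout[OF True False2] by (simp add: cmodT)
        then show ?thesis using True False2 by simp
      qed
    qed simp
  qed
  also have "\<dots> = ennreal ((1+\<epsilon>)\<^sup>2) * ennreal (h + 2*\<delta>) + ennreal (\<epsilon>\<^sup>2) * ennreal (1/b)"
  proof -
    have m1: "emeasure lebesgue {tc - r - \<delta>..tc + r + \<delta>} = ennreal (h + 2*\<delta>)"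
      using r0 d by (simp add: r_def algebra_simps)
    have m2: "emeasure lebesgue W = ennreal (1/b)"
      using b by (simp add: W_def)
    have Ws: "W \<in> sets lebesgue" by (simp add: W_def)
    have I2: "(\<integral>\<^sup>+t. ennreal (\<epsilon>\<^sup>2) * indicator W t \<partial>lebesgue) = ennreal (\<epsilon>\<^sup>2) * ennreal (1/b)"
      using nn_integral_cmult_indicator[OF Ws, of "ennreal (\<epsilon>\<^sup>2)"] m2 by simp
    have I1: "(\<integral>\<^sup>+t. ennreal ((1+\<epsilon>)\<^sup>2) * indicator {tc - r - \<delta>..tc + r + \<delta>} t \<partial>lebesgue) = ennreal ((1+\<epsilon>)\<^sup>2) * ennreal (h + 2*\<delta>)"
      using nn_integral_cmult_indicator[of "{tc - r - \<delta>..tc + r + \<delta>}" lebesgue "ennreal ((1+\<epsilon>)\<^sup>2)"] m1 by simp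
    show ?thesis
      by (subst nn_integral_add) (use Ws in \<open>auto simp: I1 I2\<close>)
  qed
  also have "\<dots> = ennreal ((1+\<epsilon>)\<^sup>2 * (h + 2*\<delta>) + \<epsilon>\<^sup>2 / b)"
  proof -
    have e1: "ennreal ((1+\<epsilon>)\<^sup>2) * ennreal (h + 2*\<delta>) = ennreal ((1+\<epsilon>)\<^sup>2 * (h + 2*\<delta>))"
      by (rule ennreal_mult[symmetric]) (use h d in auto)
    have e2: "ennreal (\<epsilon>\<^sup>2) * ennreal (1/b) = ennreal (\<epsilon>\<^sup>2 / b)"
      using ennreal_mult[of "\<epsilon>\<^sup>2" "1/b"] b by simp
    have e3: "ennreal ((1+\<epsilon>)\<^sup>2 * (h + 2*\<delta>) + \<epsilon>\<^sup>2 / b) = ennreal ((1+\<epsilon>)\<^sup>2 * (h + 2*\<delta>)) + ennreal (\<epsilon>\<^sup>2 / b)"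
      by (rule ennreal_plus) (use h d b in auto)
    show ?thesis unfolding e1 e2 e3 ..
  qed
  finally have Ib: "(\<integral>\<^sup>+t. indicator W t * ennreal ((cmod (trig b q M t))\<^sup>2) \<partial>lebesgue)
      \<le> ennreal ((1+\<epsilon>)\<^sup>2 * (h + 2*\<delta>) + \<epsilon>\<^sup>2 / b)" .
  have "ennreal ((1-\<epsilon>)\<^sup>2) * (\<integral>\<^sup>+t. indicator {x..x+h} t * V t \<partial>lebesgue)
      = (\<integral>\<^sup>+t. indicator {x..x+h} t * (ennreal ((1-\<epsilon>)\<^sup>2) * V t) \<partial>lebesgue)"
    by (subst nn_integral_cmult[symmetric]) (auto simp: mult_ac)
  also have "\<dots> \<le> (\<integral>\<^sup>+t. indicator W t * (ennreal ((cmod (trig b q M t))\<^sup>2) * V t) \<partial>lebesgue)"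
  proof (intro nn_integral_mono)
    fix t
    show "indicator {x..x+h} t * (ennreal ((1-\<epsilon>)\<^sup>2) * V t) \<le> indicator W t * (ennreal ((cmod (trig b q M t))\<^sup>2) * V t)"
    proof (cases "t \<in> {x..x+h}")
      case True
      then have "t \<in> W" using sub by auto
      moreover have "ennreal ((1-\<epsilon>)\<^sup>2) \<le> ennreal ((cmod (trig b q M t))\<^sup>2)"
        using Pin[OF True] by (simp add: cmodT)
      ultimately show ?thesis using True by (auto intro: mult_right_mono)
    qed simp
  qed
  also have "\<dots> \<le> ennreal lam * (\<integral>\<^sup>+t. indicator W t * ennreal ((cmod (trig b q M t))\<^sup>2) \<partial>lebesgue)"
    unfolding W_def V_def lam_def by (rule main_ineq[OF g pf b MqP(1) N])
  also have "\<dots> \<le> ennreal lam * ennreal ((1+\<epsilon>)\<^sup>2 * (h + 2*\<delta>) + \<epsilon>\<^sup>2 / b)"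
    by (rule mult_left_mono[OF Ib]) simp
  finally show ?thesis
    by (simp add: lam_def V_def)
qed

lemma interval_bound:
  assumes g: "g \<in> L2" and pf: "preframe g a b B" and b: "b > 0" and N: "finite N"
    and h: "0 < h" "h < 1/b"
  shows "(\<integral>\<^sup>+t. indicator {x..x+h} t * Vc g a b N c t \<partial>lebesgue)
         \<le> ennreal (b * max B 0 * (\<Sum>n\<in>N. (cmod (c n))\<^sup>2) * h)"
proof -
  define lam where "lam = b * max B 0 * (\<Sum>n\<in>N. (cmod (c n))\<^sup>2)"
  define A where "A = (\<integral>\<^sup>+t. indicator {x..x+h} t * Vc g a b N c t \<partial>lebesgue)"
  define \<delta>0 where "\<delta>0 = 1/(2*b) - h/2"
  have lam0: "lam \<ge> 0" unfolding lam_def using b by (auto intro!: mult_nonneg_nonneg sum_nonneg)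
  have d0: "\<delta>0 > 0" using h b by (simp add: \<delta>0_def field_simps)
  define ee where "ee n = inverse (real (Suc n)) / 2" for n
  define dd where "dd n = \<delta>0 * inverse (real (Suc n)) / 2" for n
  define R where "R n = (1 + ee n)\<^sup>2 * (h + 2 * dd n) + (ee n)\<^sup>2 / b" for n
  have ee: "0 < ee n" "ee n < 1" for n
  proof -
    show "0 < ee n" by (simp add: ee_def)
    have "inverse (real (Suc n)) \<le> 1" by (simp add: inverse_le_1_iff)
    then show "ee n < 1" by (simp add: ee_def)
  qed
  have dd: "0 < dd n" "h/2 + dd n < 1/(2*b)" for n
  proof -
    show "0 < dd n" using d0 by (simp add: dd_def)
    have "inverse (real (Suc n)) \<le> 1" by (simp add: inverse_le_1_iff)
    then have "dd n < \<delta>0" using d0 by (simp add: dd_def)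
    then show "h/2 + dd n < 1/(2*b)" by (simp add: \<delta>0_def)
  qed
  have step: "ennreal ((1 - ee n)\<^sup>2) * A \<le> ennreal lam * ennreal (R n)" for n
    unfolding A_def lam_def R_def
    by (rule interval_step[OF g pf b N h(1) ee(1) ee(2) dd(1) dd(2)])
  have Afin: "A \<noteq> \<infinity>"
  proof
    assume "A = \<infinity>"
    moreover have "(1 - ee 0)\<^sup>2 > 0" using ee[of 0] by simp
    ultimately have "ennreal ((1 - ee 0)\<^sup>2) * A = \<infinity>" by (simp add: ennreal_mult_eq_top_iff)
    with step[of 0] show False by (simp add: ennreal_mult_eq_top_iff top_unique)
  qed
  define ar where "ar = enn2real A"
  have Aeq: "A = ennreal ar" using Afin unfolding ar_def by (cases A) auto
  have ar0: "ar \<ge> 0" unfolding ar_def by simp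
  have R0: "R n \<ge> 0" for n using ee[of n] dd[of n] h b by (simp add: R_def)
  have real_step: "(1 - ee n)\<^sup>2 * ar \<le> lam * R n" for n
  proof -
    have "ennreal ((1 - ee n)\<^sup>2 * ar) \<le> ennreal (lam * R n)"
      using step[of n] unfolding Aeq by (simp add: ennreal_mult[symmetric] ar0 lam0 R0)
    then show ?thesis using lam0 R0 by (simp add: ennreal_le_iff mult_nonneg_nonneg)
  qed
  have ee0: "ee \<longlonglongrightarrow> 0"
  proof -
    have "(\<lambda>n. inverse (real (Suc n)) / 2) \<longlonglongrightarrow> 0 / 2"
      by (intro tendsto_divide LIMSEQ_inverse_real_of_nat tendsto_const) simp
    then show ?thesis by (simp add: ee_def[abs_def])
  qed
  have dd0: "dd \<longlonglongrightarrow> 0"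
  proof -
    have "(\<lambda>n. \<delta>0 * inverse (real (Suc n)) / 2) \<longlonglongrightarrow> \<delta>0 * 0 / 2"
      by (intro tendsto_divide tendsto_mult LIMSEQ_inverse_real_of_nat tendsto_const) simp
    then show ?thesis by (simp add: dd_def[abs_def])
  qed
  have L1: "(\<lambda>n. (1 - ee n)\<^sup>2 * ar) \<longlonglongrightarrow> (1 - 0)\<^sup>2 * ar"
    by (intro tendsto_intros ee0)
  have L2: "(\<lambda>n. lam * R n) \<longlonglongrightarrow> lam * ((1 + 0)\<^sup>2 * (h + 2 * 0) + 0\<^sup>2 / b)"
    unfolding R_def using b by (intro tendsto_intros ee0 dd0) auto
  have "ar \<le> lam * h"
    using LIMSEQ_le[OF L1 L2] real_step by auto
  then have "A \<le> ennreal (lam * h)" unfolding Aeq by (simp add: ennreal_leI)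
  then show ?thesis by (simp add: A_def lam_def)
qed

lemma local_integral_bound:
  fixes f :: "real \<Rightarrow> real" and V :: "real \<Rightarrow> ennreal"
  assumes fi: "integrable lebesgue f" and f0: "\<And>t. 0 \<le> f t"
    and fV: "\<And>t. ennreal (f t) \<le> V t"
    and Vb: "(\<integral>\<^sup>+t. indicator {x..x+h} t * V t \<partial>lebesgue) \<le> ennreal C" and C0: "C \<ge> 0"
  shows "integral {x..x+h} f \<le> C"
proof -
  have si: "set_integrable lebesgue {x..x+h} f"
    unfolding set_integrable_def by (rule integrable_mult_indicator[OF _ fi]) simp
  have "ennreal (integral {x..x+h} f) = ennreal (set_lebesgue_integral lebesgue {x..x+h} f)"
    by (simp add: set_lebesgue_integral_eq_integral(2)[OF si])
  also have "\<dots> = (\<integral>\<^sup>+t. ennreal (indicator {x..x+h} t *\<^sub>R f t) \<partial>lebesgue)"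
    unfolding set_lebesgue_integral_def
    by (rule nn_integral_eq_integral[symmetric]) (use si f0 in \<open>auto simp: set_integrable_def\<close>)
  also have "\<dots> \<le> (\<integral>\<^sup>+t. indicator {x..x+h} t * V t \<partial>lebesgue)"
    by (intro nn_integral_mono) (auto simp: indicator_def fV)
  also have "\<dots> \<le> ennreal C" by (rule Vb)
  finally show ?thesis using C0 by (simp add: ennreal_le_iff)
qed

lemma V_ae_bound:
  assumes g: "g \<in> L2" and pf: "preframe g a b B" and b: "b > 0" and N: "finite N"
  shows "AE t in lebesgue. Vc g a b N c t \<le> ennreal (b * max B 0 * (\<Sum>n\<in>N. (cmod (c n))\<^sup>2))"
proof -
  define V where "V = Vc g a b N c"
  define lam where "lam = b * max B 0 * (\<Sum>n\<in>N. (cmod (c n))\<^sup>2)"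
  have lam0: "lam \<ge> 0" unfolding lam_def using b by (auto intro!: mult_nonneg_nonneg sum_nonneg)
  define Lw where "Lw = 1/(2*b)"
  have Lw: "0 < Lw" "Lw < 1/b" using b by (auto simp: Lw_def field_simps)
  define u where "u j = of_int j * (Lw/2)" for j :: int
  define J where "J j = {u j..u j + Lw}" for j
  have Vm[measurable]: "V \<in> borel_measurable lebesgue" unfolding V_def by (rule Vc_measurable[OF g N])
  have Jb: "(\<integral>\<^sup>+t. indicator (J j) t * V t \<partial>lebesgue) \<le> ennreal (lam * Lw)" for j
    unfolding J_def V_def lam_def by (rule interval_bound[OF g pf b N Lw])
  have bound: "(\<integral>\<^sup>+t. indicator {x..x+h} t * V t \<partial>lebesgue) \<le> ennreal (lam * h)" if "0 < h" "h < 1/b" for x h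
    unfolding V_def lam_def by (rule interval_bound[OF g pf b N that])
  have fin: "AE t in lebesgue. t \<in> J j \<longrightarrow> V t \<noteq> \<infinity>" for j
  proof -
    have "AE t in lebesgue. indicator (J j) t * V t \<noteq> \<infinity>"
      by (rule nn_integral_PInf_AE) (use Jb[of j] in \<open>auto simp: J_def top_unique\<close>)
    then show ?thesis by eventually_elim (auto simp: indicator_def)
  qed
  define f where "f j t = indicator (J j) t * enn2real (V t)" for j t
  have f0: "0 \<le> f j t" for j t unfolding f_def by simp
  have fm[measurable]: "f j \<in> borel_measurable lebesgue" for j
    unfolding f_def[abs_def] J_def by measurable
  have fV: "ennreal (f j t) \<le> V t" for j t
    unfolding f_def by (cases "V t") (auto simp: indicator_def)
  have fVJ: "ennreal (f j t) \<le> indicator (J j) t * V t" for j t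
    unfolding f_def by (cases "V t") (auto simp: indicator_def)
  have fi: "integrable lebesgue (f j)" for j
  proof (rule integrableI_bounded)
    have "(\<integral>\<^sup>+t. ennreal (norm (f j t)) \<partial>lebesgue) \<le> (\<integral>\<^sup>+t. indicator (J j) t * V t \<partial>lebesgue)"
      by (intro nn_integral_mono) (simp add: f0 fVJ)
    also have "\<dots> < \<infinity>" using Jb[of j] by (simp add: le_less_trans)
    finally show "(\<integral>\<^sup>+t. ennreal (norm (f j t)) \<partial>lebesgue) < \<infinity>" .
  qed simp
  have "\<exists>NN. negligible NN \<and> (\<forall>x e. x \<notin> NN \<and> 0 < e \<longrightarrow>
          (\<exists>d>0. \<forall>h. 0 < h \<and> h < d \<longrightarrow> norm (integral (cbox x (x + h *\<^sub>R One)) (f j) /\<^sub>R h ^ DIM(real) - f j x) < e))" for j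
  proof -
    have "\<And>a b. f j integrable_on cbox a b"
      using integrable_on_subcbox[OF integrable_on_lebesgue[OF fi[of j]]] by blast
    then obtain NN where "negligible NN"
       "\<And>x e. \<lbrakk>x \<notin> NN; 0 < e\<rbrakk> \<Longrightarrow>
               \<exists>d>0. \<forall>h. 0 < h \<and> h < d \<longrightarrow>
                         norm(integral (cbox x (x + h *\<^sub>R One)) (f j) /\<^sub>R h ^ DIM(real) - f j x) < e"
      by (rule integrable_ccontinuous_explicit) blast
    then show ?thesis by blast
  qed
  then obtain NN where NN: "\<And>j. negligible (NN j)"
    "\<And>j x e. x \<notin> NN j \<Longrightarrow> 0 < e \<Longrightarrow>
       (\<exists>d>0. \<forall>h. 0 < h \<and> h < d \<longrightarrow> norm (integral (cbox x (x + h *\<^sub>R One)) (f j) /\<^sub>R h ^ DIM(real) - f j x) < e)"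
    by metis
  have NN': "\<And>j x e. x \<notin> NN j \<Longrightarrow> 0 < e \<Longrightarrow>
       (\<exists>d>0. \<forall>h. 0 < h \<and> h < d \<longrightarrow> \<bar>integral {x..x+h} (f j) / h - f j x\<bar> < e)"
    using NN(2) by (simp add: divide_inverse mult.commute)
  have AE1: "AE x in lebesgue. \<forall>j. x \<notin> NN j"
    unfolding AE_all_countable using NN(1) by (auto intro!: AE_not_in simp: negligible_iff_null_sets)
  have AE2: "AE x in lebesgue. \<forall>j. x \<in> J j \<longrightarrow> V x \<noteq> \<infinity>"
    unfolding AE_all_countable using fin by auto
  have "AE x in lebesgue. V x \<le> ennreal lam"
    using AE1 AE2
  proof eventually_elim
    case (elim x)
    define j where "j = \<lfloor>x / (Lw/2)\<rfloor>"
    have ux: "u j \<le> x" "x < u j + Lw/2"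
    proof -
      have "of_int j \<le> x / (Lw/2)" "x / (Lw/2) < of_int j + 1" unfolding j_def by linarith+
      then show "u j \<le> x" "x < u j + Lw/2" using Lw by (auto simp: u_def field_simps)
    qed
    have xJ: "x \<in> J j" using ux Lw by (auto simp: J_def)
    have Vfin: "V x \<noteq> \<infinity>" using elim(2) xJ by blast
    have fx: "f j x = enn2real (V x)" using xJ by (simp add: f_def)
    have ib: "integral {x..x+h} (f j) \<le> lam * h" if "0 < h" "h < Lw/2" for h
    proof (rule local_integral_bound[OF fi f0])
      show "ennreal (f j t) \<le> indicator (J j) t * V t" for t by (rule fVJ)
      have sub: "{x..x+h} \<subseteq> J j" using ux that by (auto simp: J_def)
      have "(\<integral>\<^sup>+t. indicator {x..x+h} t * (indicator (J j) t * V t) \<partial>lebesgue)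
            \<le> (\<integral>\<^sup>+t. indicator {x..x+h} t * V t \<partial>lebesgue)"
        by (intro nn_integral_mono) (auto simp: indicator_def)
      also have "\<dots> \<le> ennreal (lam * h)" by (rule bound) (use that Lw in auto)
      finally show "(\<integral>\<^sup>+t. indicator {x..x+h} t * (indicator (J j) t * V t) \<partial>lebesgue) \<le> ennreal (lam * h)" .
      show "0 \<le> lam * h" using lam0 that by simp
    qed
    have "enn2real (V x) \<le> lam + e" if e: "e > 0" for e
    proof -
      obtain d where d: "d > 0" "\<And>h. 0 < h \<Longrightarrow> h < d \<Longrightarrow> \<bar>integral {x..x+h} (f j) / h - f j x\<bar> < e"
        using NN'[OF _ e, of x j] elim(1) by blast
      define h where "h = min d (Lw/2) / 2"
      have h: "0 < h" "h < d" "h < Lw/2" using d Lw by (auto simp: h_def)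
      have "integral {x..x+h} (f j) / h \<le> lam" using ib[OF h(1) h(3)] h(1) by (simp add: divide_le_eq)
      then show ?thesis using d(2)[OF h(1) h(2)] fx by linarith
    qed
    then have "enn2real (V x) \<le> lam" by (meson field_le_epsilon)
    then show "V x \<le> ennreal lam" using Vfin by (cases "V x") (auto simp: ennreal_le_iff)
  qed
  then show ?thesis by (simp add: V_def lam_def)
qed

lemma ennreal_finite_sum_le_infsum:
  fixes f :: "'a \<Rightarrow> ennreal"
  assumes "finite F"
  shows "sum f F \<le> (\<Sum>\<^sub>\<infinity>k. f k)"
proof -
  have "(\<Sum>\<^sub>\<infinity>k. f k) = Sup (sum f ` {F. finite F \<and> F \<subseteq> UNIV})"
    by (rule nonneg_infsum_complete) auto
  then show ?thesis using assms by (auto intro: Sup_upper)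
qed

lemma sum_sq_le_enn:
  fixes x :: "'a \<Rightarrow> complex"
  assumes X: "(\<Sum>\<^sub>\<infinity>k. ennreal ((cmod (x k))\<^sup>2)) \<noteq> \<infinity>" and F: "finite F"
  shows "(\<Sum>k\<in>F. (cmod (x k))\<^sup>2) \<le> enn2real (\<Sum>\<^sub>\<infinity>k. ennreal ((cmod (x k))\<^sup>2))"
proof -
  have "ennreal (\<Sum>k\<in>F. (cmod (x k))\<^sup>2) = (\<Sum>k\<in>F. ennreal ((cmod (x k))\<^sup>2))"
    by (rule sum_ennreal[symmetric]) auto
  also have "\<dots> \<le> (\<Sum>\<^sub>\<infinity>k. ennreal ((cmod (x k))\<^sup>2))" by (rule ennreal_finite_sum_le_infsum[OF F])
  finally show ?thesis using X
    by (cases "(\<Sum>\<^sub>\<infinity>k. ennreal ((cmod (x k))\<^sup>2))") (auto simp: ennreal_le_iff2 sum_nonneg)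
qed

lemma CS_infsum:
  fixes x y :: "'a \<Rightarrow> complex"
  assumes X: "(\<Sum>\<^sub>\<infinity>k. ennreal ((cmod (x k))\<^sup>2)) \<noteq> \<infinity>"
      and Y: "(\<Sum>\<^sub>\<infinity>k. ennreal ((cmod (y k))\<^sup>2)) \<noteq> \<infinity>"
  shows "(\<lambda>k. norm (x k * y k)) summable_on UNIV"
    and "ennreal ((cmod (\<Sum>\<^sub>\<infinity>k. x k * y k))\<^sup>2)
         \<le> (\<Sum>\<^sub>\<infinity>k. ennreal ((cmod (x k))\<^sup>2)) * (\<Sum>\<^sub>\<infinity>k. ennreal ((cmod (y k))\<^sup>2))"
proof -
  define X' where "X' = enn2real (\<Sum>\<^sub>\<infinity>k. ennreal ((cmod (x k))\<^sup>2))"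
  define Y' where "Y' = enn2real (\<Sum>\<^sub>\<infinity>k. ennreal ((cmod (y k))\<^sup>2))"
  have X0: "X' \<ge> 0" and Y0: "Y' \<ge> 0" by (auto simp: X'_def Y'_def)
  have fs: "(\<Sum>k\<in>F. norm (x k * y k)) \<le> sqrt X' * sqrt Y'" if F: "finite F" for F
  proof -
    have "(\<Sum>k\<in>F. norm (x k * y k))\<^sup>2 = (\<Sum>k\<in>F. cmod (x k) * cmod (y k))\<^sup>2"
      by (simp add: norm_mult)
    also have "\<dots> \<le> (\<Sum>k\<in>F. (cmod (x k))\<^sup>2) * (\<Sum>k\<in>F. (cmod (y k))\<^sup>2)"
      by (rule Cauchy_Schwarz_ineq_sum)
    also have "\<dots> \<le> X' * Y'"
      using sum_sq_le_enn[OF X F] sum_sq_le_enn[OF Y F] X0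
      by (intro mult_mono) (auto simp: X'_def Y'_def intro: sum_nonneg)
    finally have "(\<Sum>k\<in>F. norm (x k * y k))\<^sup>2 \<le> X' * Y'" .
    then have "sqrt ((\<Sum>k\<in>F. norm (x k * y k))\<^sup>2) \<le> sqrt (X' * Y')" by (rule real_sqrt_le_mono)
    then show ?thesis by (simp add: real_sqrt_mult sum_nonneg)
  qed
  show as: "(\<lambda>k. norm (x k * y k)) summable_on UNIV"
    by (rule nonneg_bdd_above_summable_on) (auto intro!: bdd_aboveI[of _ "sqrt X' * sqrt Y'"] fs)
  have "cmod (\<Sum>\<^sub>\<infinity>k. x k * y k) \<le> (\<Sum>\<^sub>\<infinity>k. norm (x k * y k))"
    using as by (rule norm_infsum_bound)
  also have "\<dots> \<le> sqrt X' * sqrt Y'"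
    by (rule infsum_le_finite_sums[OF as fs]) auto
  finally have "(cmod (\<Sum>\<^sub>\<infinity>k. x k * y k))\<^sup>2 \<le> (sqrt X' * sqrt Y')\<^sup>2"
    by (intro power_mono) auto
  also have "\<dots> = X' * Y'" using X0 Y0 by (simp add: power_mult_distrib)
  finally have "ennreal ((cmod (\<Sum>\<^sub>\<infinity>k. x k * y k))\<^sup>2) \<le> ennreal X' * ennreal Y'"
    using X0 Y0 by (simp add: ennreal_mult[symmetric] ennreal_leI)
  also have "ennreal X' * ennreal Y' = (\<Sum>\<^sub>\<infinity>k. ennreal ((cmod (x k))\<^sup>2)) * (\<Sum>\<^sub>\<infinity>k. ennreal ((cmod (y k))\<^sup>2))"
    using X Y by (simp add: X'_def Y'_def ennreal_enn2real_if)
  finally show "ennreal ((cmod (\<Sum>\<^sub>\<infinity>k. x k * y k))\<^sup>2)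
         \<le> (\<Sum>\<^sub>\<infinity>k. ennreal ((cmod (x k))\<^sup>2)) * (\<Sum>\<^sub>\<infinity>k. ennreal ((cmod (y k))\<^sup>2))" .
qed

lemma infsum_finite_sum_swap:
  fixes f :: "'i \<Rightarrow> 'a \<Rightarrow> complex"
  assumes "finite N" "\<And>n. n \<in> N \<Longrightarrow> f n summable_on UNIV"
  shows "(\<Sum>\<^sub>\<infinity>k. \<Sum>n\<in>N. f n k) = (\<Sum>n\<in>N. \<Sum>\<^sub>\<infinity>k. f n k)"
    and "(\<lambda>k. \<Sum>n\<in>N. f n k) summable_on UNIV"
  using assms
proof (induction N rule: finite_induct)
  case empty
  { case 1 show ?case by simp }
  { case 2 show ?case by simp }
next
  case (insert n N)
  { case 1
    have s: "(\<lambda>k. \<Sum>n\<in>N. f n k) summable_on UNIV" using insert.IH(2) 1 by auto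
    have "(\<Sum>\<^sub>\<infinity>k. \<Sum>n\<in>insert n N. f n k) = (\<Sum>\<^sub>\<infinity>k. f n k + (\<Sum>n\<in>N. f n k))"
      using insert.hyps by simp
    also have "\<dots> = (\<Sum>\<^sub>\<infinity>k. f n k) + (\<Sum>\<^sub>\<infinity>k. \<Sum>n\<in>N. f n k)"
      by (rule infsum_add) (use 1 s in auto)
    also have "\<dots> = (\<Sum>n\<in>insert n N. \<Sum>\<^sub>\<infinity>k. f n k)"
      using insert.hyps insert.IH(1) 1 by simp
    finally show ?case . }
  { case 2
    have s: "(\<lambda>k. \<Sum>n\<in>N. f n k) summable_on UNIV" using insert.IH(2) 2 by auto
    have "(\<lambda>k. f n k + (\<Sum>n\<in>N. f n k)) summable_on UNIV"
      by (rule summable_on_add) (use 2 s in auto)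
    then show ?case using insert.hyps by simp }
qed

lemma norm_b_measurable[measurable]:
  assumes "f \<in> borel_measurable lebesgue"
  shows "norm_b b f \<in> borel_measurable lebesgue"
proof -
  have [measurable]: "(\<lambda>t. f (t - of_int k / b)) \<in> borel_measurable lebesgue" for k
    by (rule measurable_shift_minus[OF assms])
  show ?thesis unfolding norm_b_def[abs_def] by measurable
qed

lemma norm_b_fin:
  assumes f: "f \<in> L2" and b: "b > 0"
  shows "AE t in lebesgue. norm_b b f t \<noteq> \<infinity>"
proof -
  have fm[measurable]: "f \<in> borel_measurable lebesgue" using L2_D[OF f] by simp
  have Fm[measurable]: "(\<lambda>t. ennreal ((cmod (f t))\<^sup>2)) \<in> borel_measurable lebesgue" by measurable
  have w: "AE t in lebesgue. t \<in> {of_int j / b..<of_int j / b + 1/b} \<longrightarrow> norm_b b f t \<noteq> \<infinity>" for j :: int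
  proof -
    have "(\<integral>\<^sup>+t. indicator {of_int j / b..<of_int j / b + 1/b} t * norm_b b f t \<partial>lebesgue)
        = (\<integral>\<^sup>+t. ennreal ((cmod (f t))\<^sup>2) \<partial>lebesgue)"
      unfolding norm_b_def by (rule periodize[OF Fm b, symmetric])
    also have "\<dots> < \<infinity>" by (rule L2_nn_integral_finite[OF f])
    finally have "AE t in lebesgue. indicator {of_int j / b..<of_int j / b + 1/b} t * norm_b b f t \<noteq> \<infinity>"
      by (intro nn_integral_PInf_AE) auto
    then show ?thesis by eventually_elim (auto simp: indicator_def)
  qed
  have "AE t in lebesgue. \<forall>j::int. t \<in> {of_int j / b..<of_int j / b + 1/b} \<longrightarrow> norm_b b f t \<noteq> \<infinity>"
    unfolding AE_all_countable using w by auto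
  then show ?thesis
  proof eventually_elim
    case (elim t)
    define j where "j = \<lfloor>t * b\<rfloor>"
    have "of_int j \<le> t * b" "t * b < of_int j + 1" unfolding j_def by linarith+
    then have "t \<in> {of_int j / b..<of_int j / b + 1/b}" using b by (auto simp: field_simps)
    then show ?case using elim by blast
  qed
qed

lemma CS_point:
  assumes N: "finite N"
    and G: "norm_b b g t \<noteq> \<infinity>"
    and Gn: "\<And>n. n \<in> N \<Longrightarrow> norm_b b (transl (of_int n * a) g) t \<noteq> \<infinity>"
    and V: "Vc g a b N c t \<noteq> \<infinity>"
  shows "ennreal ((cmod (\<Sum>n\<in>N. c n * cnj (inner_b b g (transl (of_int n * a) g) t)))\<^sup>2)
         \<le> norm_b b g t * Vc g a b N c t"
proof -
  define x where "x k = cnj (g (t - of_int k / b))" for k :: int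
  define z where "z n k = transl (of_int n * a) g (t - of_int k / b)" for n k :: int
  have Xe: "(\<Sum>\<^sub>\<infinity>k. ennreal ((cmod (x k))\<^sup>2)) = norm_b b g t"
    unfolding x_def norm_b_def by simp
  have Ze: "(\<Sum>\<^sub>\<infinity>k. ennreal ((cmod (z n k))\<^sup>2)) = norm_b b (transl (of_int n * a) g) t" for n
    unfolding z_def norm_b_def by simp
  have summ: "(\<lambda>k. x k * z n k) summable_on UNIV" if "n \<in> N" for n
    using abs_summable_summable[OF CS_infsum(1)[of x "z n"]] G Gn[OF that] Xe Ze by simp
  have Hc: "cnj (inner_b b g (transl (of_int n * a) g) t) = (\<Sum>\<^sub>\<infinity>k. x k * z n k)" for n
    unfolding inner_b_def x_def z_def infsum_cnj[symmetric] by simp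
  have "(\<Sum>n\<in>N. c n * cnj (inner_b b g (transl (of_int n * a) g) t))
      = (\<Sum>n\<in>N. \<Sum>\<^sub>\<infinity>k. c n * (x k * z n k))"
    by (intro sum.cong refl) (simp add: Hc infsum_cmult_right')
  also have "\<dots> = (\<Sum>\<^sub>\<infinity>k. \<Sum>n\<in>N. c n * (x k * z n k))"
    by (rule infsum_finite_sum_swap(1)[symmetric, OF N]) (use summ in \<open>auto intro: summable_on_cmult_right\<close>)
  also have "\<dots> = (\<Sum>\<^sub>\<infinity>k. x k * uc g a N c (t - of_int k / b))"
    by (intro infsum_cong) (simp add: uc_def z_def transl_def sum_distrib_left mult_ac)
  finally have eq: "(\<Sum>n\<in>N. c n * cnj (inner_b b g (transl (of_int n * a) g) t))
      = (\<Sum>\<^sub>\<infinity>k. x k * uc g a N c (t - of_int k / b))" .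
  have Ve: "(\<Sum>\<^sub>\<infinity>k. ennreal ((cmod (uc g a N c (t - of_int k / b)))\<^sup>2)) = Vc g a b N c t"
    unfolding Vc_def ..
  show ?thesis unfolding eq
    using CS_infsum(2)[of x "\<lambda>k. uc g a N c (t - of_int k / b)"] G V Xe Ve by simp
qed

definition decode :: "nat \<Rightarrow> (rat \<times> rat) list \<Rightarrow> int \<Rightarrow> complex" where
  "decode d l n = (if - int d \<le> n \<and> n \<le> int d
      then Complex (of_rat (fst (l ! nat (n + int d)))) (of_rat (snd (l ! nat (n + int d)))) else 0)"

lemma decode_surj:
  "\<exists>l. \<forall>n\<in>{-int d..int d}. decode d l n = Complex (of_rat (rx n)) (of_rat (ry n))"
proof (rule exI[of _ "map (\<lambda>i. (rx (int i - int d), ry (int i - int d))) [0..<2*d+1]"], intro ballI)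
  fix n assume n: "n \<in> {-int d..int d}"
  then have i: "nat (n + int d) < 2 * d + 1" by auto
  have e: "int (nat (n + int d)) - int d = n" using n by auto
  have "map (\<lambda>i. (rx (int i - int d), ry (int i - int d))) [0..<2*d+1] ! nat (n + int d) = (rx n, ry n)"
  proof -
    have u: "[0..<2*d+1] ! nat (n + int d) = nat (n + int d)"
      using nth_upt[of 0 "nat (n + int d)" "2*d+1"] i by (simp del: upt_Suc)
    show ?thesis using i n by (simp add: nth_map u e del: upt_Suc)
  qed
  then show "decode d (map (\<lambda>i. (rx (int i - int d), ry (int i - int d))) [0..<2*d+1]) n = Complex (of_rat (rx n)) (of_rat (ry n))"
    using n by (simp add: decode_def)
qed

definition rq :: "nat \<Rightarrow> real \<Rightarrow> rat" where
  "rq j x = of_int \<lfloor>x * real (Suc j)\<rfloor> / of_nat (Suc j)"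

lemma rq_tendsto: "(\<lambda>j. real_of_rat (rq j x)) \<longlonglongrightarrow> x"
proof (rule tendsto_sandwich)
  have eq: "real_of_rat (rq j x) = of_int \<lfloor>x * real (Suc j)\<rfloor> / real (Suc j)" for j
    by (simp add: rq_def of_rat_divide of_rat_of_nat_eq del: of_nat_Suc)
  show "\<forall>\<^sub>F j in sequentially. x + - inverse (real (Suc j)) \<le> real_of_rat (rq j x)"
  proof (intro always_eventually allI)
    fix j
    have "x * real (Suc j) - 1 \<le> of_int \<lfloor>x * real (Suc j)\<rfloor>" by linarith
    then have "(x * real (Suc j) - 1) / real (Suc j) \<le> of_int \<lfloor>x * real (Suc j)\<rfloor> / real (Suc j)"
      by (intro divide_right_mono) auto
    then show "x + - inverse (real (Suc j)) \<le> real_of_rat (rq j x)"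
      unfolding eq by (simp add: field_simps del: of_nat_Suc)
  qed
  show "\<forall>\<^sub>F j in sequentially. real_of_rat (rq j x) \<le> x"
  proof (intro always_eventually allI)
    fix j
    have "of_int \<lfloor>x * real (Suc j)\<rfloor> \<le> x * real (Suc j)" by linarith
    then have "of_int \<lfloor>x * real (Suc j)\<rfloor> / real (Suc j) \<le> x * real (Suc j) / real (Suc j)"
      by (intro divide_right_mono) auto
    then show "real_of_rat (rq j x) \<le> x" unfolding eq by (simp del: of_nat_Suc)
  qed
  show "(\<lambda>j. x + - inverse (real (Suc j))) \<longlonglongrightarrow> x" by (rule LIMSEQ_inverse_real_of_nat_add_minus)
qed simp

lemma point_final:
  fixes H :: "int \<Rightarrow> complex" and Gr lam0 :: real
  assumes Gr: "Gr \<ge> 0" and lam0: "lam0 \<ge> 0"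
    and hyp: "\<And>l. (cmod (\<Sum>n\<in>{-int d..int d}. decode d l n * cnj (H n)))\<^sup>2
                 \<le> Gr * lam0 * (\<Sum>n\<in>{-int d..int d}. (cmod (decode d l n))\<^sup>2)"
  shows "(\<Sum>n\<in>{-int d..int d}. (cmod (H n))\<^sup>2) \<le> Gr * lam0"
proof -
  define Nd where "Nd = {-int d..int d}"
  define cj where "cj j n = Complex (of_rat (rq j (Re (H n)))) (of_rat (rq j (Im (H n))))" for j n
  have hyp2: "(cmod (\<Sum>n\<in>Nd. cj j n * cnj (H n)))\<^sup>2 \<le> Gr * lam0 * (\<Sum>n\<in>Nd. (cmod (cj j n))\<^sup>2)" for j
  proof -
    obtain l where l: "\<forall>n\<in>Nd. decode d l n = cj j n"
      using decode_surj[of d "\<lambda>n. rq j (Re (H n))" "\<lambda>n. rq j (Im (H n))"] unfolding cj_def Nd_def by blast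
    have "(\<Sum>n\<in>Nd. cj j n * cnj (H n)) = (\<Sum>n\<in>Nd. decode d l n * cnj (H n))"
      using l by (intro sum.cong) auto
    moreover have "(\<Sum>n\<in>Nd. (cmod (cj j n))\<^sup>2) = (\<Sum>n\<in>Nd. (cmod (decode d l n))\<^sup>2)"
      using l by (intro sum.cong) auto
    ultimately show ?thesis using hyp[of l] unfolding Nd_def by simp
  qed
  have cjt: "(\<lambda>j. cj j n) \<longlonglongrightarrow> H n" for n
  proof -
    have "(\<lambda>j. Complex (of_rat (rq j (Re (H n)))) (of_rat (rq j (Im (H n))))) \<longlonglongrightarrow> Complex (Re (H n)) (Im (H n))"
      by (intro tendsto_Complex rq_tendsto)
    then show ?thesis by (simp add: cj_def[abs_def])
  qed
  have L1: "(\<lambda>j. (cmod (\<Sum>n\<in>Nd. cj j n * cnj (H n)))\<^sup>2) \<longlonglongrightarrow> (cmod (\<Sum>n\<in>Nd. H n * cnj (H n)))\<^sup>2"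
    by (intro tendsto_intros cjt)
  have L2: "(\<lambda>j. Gr * lam0 * (\<Sum>n\<in>Nd. (cmod (cj j n))\<^sup>2)) \<longlonglongrightarrow> Gr * lam0 * (\<Sum>n\<in>Nd. (cmod (H n))\<^sup>2)"
    by (intro tendsto_intros cjt)
  define S where "S = (\<Sum>n\<in>Nd. (cmod (H n))\<^sup>2)"
  have S0: "S \<ge> 0" unfolding S_def by (auto intro: sum_nonneg)
  have "(\<Sum>n\<in>Nd. H n * cnj (H n)) = complex_of_real S"
    unfolding S_def of_real_sum by (intro sum.cong refl) (simp only: complex_norm_square)
  then have "(cmod (\<Sum>n\<in>Nd. H n * cnj (H n)))\<^sup>2 = S * S" using S0 by (simp add: power2_eq_square)
  then have "S * S \<le> (Gr * lam0) * S"
    using LIMSEQ_le[OF L1 L2] hyp2 S_def by auto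
  then have "S \<le> Gr * lam0"
    using S0 Gr lam0 by (cases "S = 0") (auto simp: mult_le_cancel_right)
  then show ?thesis by (simp add: S_def Nd_def)
qed

theorem theorem5p3:
  fixes g :: "real \<Rightarrow> complex" and a b B :: real
  assumes "g \<in> L2" and "a > 0" and "b > 0"
    and "preframe g a b B"
  shows "AE t in lebesgue.
           (\<Sum>\<^sub>\<infinity>n::int. ennreal ((cmod (inner_b b g (transl (of_int n * a) g) t))\<^sup>2))
             \<le> ennreal (b * B) * norm_b b g t"
proof -
  note g = assms(1) and b = assms(3) and pf = assms(4)
  define Nd where "Nd d = {-int d..int d}" for d :: nat
  define H where "H n t = inner_b b g (transl (of_int n * a) g) t" for n t
  define lam0 where "lam0 = b * max B 0"
  have lam0: "lam0 \<ge> 0" using b by (simp add: lam0_def)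
  have A1: "AE t in lebesgue. norm_b b g t \<noteq> \<infinity>" by (rule norm_b_fin[OF g b])
  have A2: "AE t in lebesgue. \<forall>n::int. norm_b b (transl (of_int n * a) g) t \<noteq> \<infinity>"
    unfolding AE_all_countable using norm_b_fin[OF L2_transl[OF g] b] by blast
  have A3: "AE t in lebesgue. \<forall>p::nat \<times> (rat \<times> rat) list.
      Vc g a b (Nd (fst p)) (decode (fst p) (snd p)) t
        \<le> ennreal (b * max B 0 * (\<Sum>n\<in>Nd (fst p). (cmod (decode (fst p) (snd p) n))\<^sup>2))"
    unfolding AE_all_countable by (intro allI V_ae_bound[OF g pf b]) (simp add: Nd_def)
  show ?thesis
    using A1 A2 A3
  proof eventually_elim
    case (elim t)
    define Gr where "Gr = enn2real (norm_b b g t)"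
    have Geq: "norm_b b g t = ennreal Gr" using elim(1) unfolding Gr_def by (cases "norm_b b g t") auto
    have Gr0: "Gr \<ge> 0" unfolding Gr_def by simp
    have partial: "(\<Sum>n\<in>Nd d. (cmod (H n t))\<^sup>2) \<le> Gr * lam0" for d
      unfolding Nd_def
    proof (rule point_final[OF Gr0 lam0])
      fix l
      define c where "c = decode d l"
      have Vb: "Vc g a b (Nd d) c t \<le> ennreal (lam0 * (\<Sum>n\<in>Nd d. (cmod (c n))\<^sup>2))"
        using elim(3)[rule_format, of "(d, l)"] by (simp add: c_def lam0_def)
      have Vfin: "Vc g a b (Nd d) c t \<noteq> \<infinity>" using Vb by (auto simp: top_unique)
      have "ennreal ((cmod (\<Sum>n\<in>Nd d. c n * cnj (H n t)))\<^sup>2) \<le> norm_b b g t * Vc g a b (Nd d) c t"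
        unfolding H_def by (rule CS_point) (use elim(1) elim(2) Vfin in \<open>auto simp: Nd_def\<close>)
      also have "\<dots> \<le> ennreal Gr * ennreal (lam0 * (\<Sum>n\<in>Nd d. (cmod (c n))\<^sup>2))"
        unfolding Geq by (rule mult_left_mono[OF Vb]) simp
      also have "\<dots> = ennreal (Gr * lam0 * (\<Sum>n\<in>Nd d. (cmod (c n))\<^sup>2))"
        using Gr0 by (simp add: ennreal_mult'[symmetric] mult.assoc)
      finally have "(cmod (\<Sum>n\<in>Nd d. c n * cnj (H n t)))\<^sup>2 \<le> Gr * lam0 * (\<Sum>n\<in>Nd d. (cmod (c n))\<^sup>2)"
        using Gr0 lam0 by (simp add: ennreal_le_iff sum_nonneg)
      then show "(cmod (\<Sum>n\<in>{-int d..int d}. decode d l n * cnj (H n t)))\<^sup>2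
            \<le> Gr * lam0 * (\<Sum>n\<in>{-int d..int d}. (cmod (decode d l n))\<^sup>2)"
        by (simp add: c_def Nd_def)
    qed
    have "(\<Sum>\<^sub>\<infinity>n::int. ennreal ((cmod (H n t))\<^sup>2)) = (SUP d. \<Sum>n\<in>Nd d. ennreal ((cmod (H n t))\<^sup>2))"
      unfolding Nd_def by (rule infsum_int_SUP)
    also have "\<dots> \<le> ennreal (Gr * lam0)"
    proof (rule SUP_least)
      fix d
      have "(\<Sum>n\<in>Nd d. ennreal ((cmod (H n t))\<^sup>2)) = ennreal (\<Sum>n\<in>Nd d. (cmod (H n t))\<^sup>2)"
        by (rule sum_ennreal) simp
      also have "\<dots> \<le> ennreal (Gr * lam0)" by (rule ennreal_leI[OF partial])
      finally show "(\<Sum>n\<in>Nd d. ennreal ((cmod (H n t))\<^sup>2)) \<le> ennreal (Gr * lam0)" .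
    qed
    also have "ennreal (Gr * lam0) = ennreal (b * B) * norm_b b g t"
    proof -
      have "ennreal lam0 = ennreal (b * B)"
        using b by (cases "B \<ge> 0") (auto simp: lam0_def max_def ennreal_neg mult_nonneg_nonpos)
      then show ?thesis unfolding Geq using Gr0 lam0 by (simp add: ennreal_mult mult.commute)
    qed
    finally show ?case unfolding H_def .
  qed
qed


end
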